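(* Let $\Gamma$ be a finitely generated group, let $G$ be a finite group with subgroups $G_1, G_2$, and let $\varphi \colon \Gamma \to G$ be a surjective homomorphism. Suppose that the profinite completions of $\varphi^{-1}(G_1)$ and $\varphi^{-1}(G_2)$ are not isomorphic. Then there exist a finite group $H$, a homomorphism $\psi \colon \Gamma \to H$ and a homomorphism $\theta \colon H \to G$ with $\varphi = \theta \circ \psi$, such that $\theta^{-1}(G_1)$ and $\theta^{-1}(G_2)$ are not isomorphic. *)

theory Defs
  imports "HOL-Analysis.Analysis" "HOL-Algebra.Algebra"
begin

definition fin_index_normals :: "('a, 'm) monoid_scheme \<Rightarrow> 'a set set" where
  "fin_index_normals K = {N. N \<lhd> K \<and> finite (carrier (K Mod N))}"

text \<open>Profinite completion as the inverse limit of the finite quotients K/N,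
  realised as compatible families (x_N) of cosets, extensional outside the index set.\<close>
definition profinite_completion :: "('a, 'm) monoid_scheme \<Rightarrow> ('a set \<Rightarrow> 'a set) monoid" where
  "profinite_completion K =
    \<lparr> carrier = {x. x \<in> (\<Pi>\<^sub>E N\<in>fin_index_normals K. carrier (K Mod N)) \<and>
                    (\<forall>N\<in>fin_index_normals K. \<forall>M\<in>fin_index_normals K. M \<subseteq> N \<longrightarrow> x M \<subseteq> x N)},
      mult = (\<lambda>x y. \<lambda>N\<in>fin_index_normals K. x N <#>\<^bsub>K\<^esub> y N),
      one = (\<lambda>N\<in>fin_index_normals K. N) \<rparr>"

definition profinite_topology :: "('a, 'm) monoid_scheme \<Rightarrow> ('a set \<Rightarrow> 'a set) topology" where
  "profinite_topology K =
     subtopology (product_topology (\<lambda>N. discrete_topology (carrier (K Mod N))) (fin_index_normals K))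
                 (carrier (profinite_completion K))"

definition profinite_completions_iso :: "('a, 'm) monoid_scheme \<Rightarrow> ('b, 'n) monoid_scheme \<Rightarrow> bool" where
  "profinite_completions_iso K L \<longleftrightarrow>
     (\<exists>f. f \<in> iso (profinite_completion K) (profinite_completion L) \<and>
          homeomorphic_map (profinite_topology K) (profinite_topology L) f)"

definition finitely_generated_group :: "('a, 'm) monoid_scheme \<Rightarrow> bool" where
  "finitely_generated_group K \<longleftrightarrow> (\<exists>S. finite S \<and> S \<subseteq> carrier K \<and> generate K S = carrier K)"

end

theory Submission
  imports Defs
begin


definition idx :: "('a,'m) monoid_scheme \<Rightarrow> 'a set \<Rightarrow> nat" where
  "idx K N = card (rcosets\<^bsub>K\<^esub> N)"

definition UU :: "('a,'m) monoid_scheme \<Rightarrow> nat \<Rightarrow> 'a set" where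
  "UU K n = carrier K \<inter> \<Inter>{N \<in> fin_index_normals K. idx K N \<le> n}"

definition datum :: "('a,'m) monoid_scheme \<Rightarrow> ('b,'n) monoid_scheme \<Rightarrow> 'a set \<Rightarrow> 'b set \<Rightarrow> ('a \<times> 'b) set \<Rightarrow> bool" where
  "datum K1 K2 A B R \<longleftrightarrow> R \<subseteq> carrier K1 \<times> carrier K2 \<and>
     (\<forall>a b a' b'. (a,b) \<in> R \<longrightarrow> (a',b') \<in> R \<longrightarrow> (a \<otimes>\<^bsub>K1\<^esub> a', b \<otimes>\<^bsub>K2\<^esub> b') \<in> R) \<and>
     (\<forall>a b. (a,b) \<in> R \<longrightarrow> (inv\<^bsub>K1\<^esub> a, inv\<^bsub>K2\<^esub> b) \<in> R) \<and>
     fst ` R = carrier K1 \<and> snd ` R = carrier K2 \<and> A \<times> B \<subseteq> R \<and>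
     (\<forall>a b. (a,b) \<in> R \<longrightarrow> (a \<in> A \<longleftrightarrow> b \<in> B))"

definition restr :: "('a,'m) monoid_scheme \<Rightarrow> ('b,'n) monoid_scheme \<Rightarrow> 'a set \<Rightarrow> 'b set \<Rightarrow> ('a \<times> 'b) set \<Rightarrow> ('a \<times> 'b) set" where
  "restr K1 K2 A B R = {(a,b). a \<in> carrier K1 \<and> b \<in> carrier K2 \<and>
      (\<exists>a0 b0. (a0,b0) \<in> R \<and> a \<in> A #>\<^bsub>K1\<^esub> a0 \<and> b \<in> B #>\<^bsub>K2\<^esub> b0)}"

lemma datum_conv:
  assumes "datum K1 K2 A B R" shows "datum K2 K1 B A (R\<inverse>)"
proof -
  have "fst ` (R\<inverse>) = snd ` R" "snd ` (R\<inverse>) = fst ` R" by force+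
  then show ?thesis using assms unfolding datum_def by auto
qed

lemma datum_fst:
  assumes "datum K1 K2 A B R" "a \<in> carrier K1" obtains b where "(a,b) \<in> R"
  using assms unfolding datum_def by (metis (no_types, lifting) image_iff prod.collapse)

lemma datum_snd:
  assumes "datum K1 K2 A B R" "b \<in> carrier K2" obtains a where "(a,b) \<in> R"
  using assms unfolding datum_def by (metis (no_types, lifting) image_iff prod.collapse)

lemma datum_carr:
  assumes "datum K1 K2 A B R" "(a,b) \<in> R" shows "a \<in> carrier K1" "b \<in> carrier K2"
  using assms unfolding datum_def by auto

lemma datum_mult:
  assumes "datum K1 K2 A B R" "(a,b) \<in> R" "(a',b') \<in> R"
  shows "(a \<otimes>\<^bsub>K1\<^esub> a', b \<otimes>\<^bsub>K2\<^esub> b') \<in> R"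
  using assms unfolding datum_def by blast

lemma datum_inv:
  assumes "datum K1 K2 A B R" "(a,b) \<in> R"
  shows "(inv\<^bsub>K1\<^esub> a, inv\<^bsub>K2\<^esub> b) \<in> R"
  using assms unfolding datum_def by blast

lemma datum_AB:
  assumes "datum K1 K2 A B R" "a \<in> A" "b \<in> B" shows "(a,b) \<in> R"
  using assms unfolding datum_def by blast

lemma datum_iff:
  assumes "datum K1 K2 A B R" "(a,b) \<in> R" shows "a \<in> A \<longleftrightarrow> b \<in> B"
  using assms unfolding datum_def by blast

lemma datum_diff:
  assumes "datum K1 K2 A B R" "(a,b) \<in> R" "(a',b') \<in> R"
  shows "(a \<otimes>\<^bsub>K1\<^esub> inv\<^bsub>K1\<^esub> a', b \<otimes>\<^bsub>K2\<^esub> inv\<^bsub>K2\<^esub> b') \<in> R"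
  using datum_mult[OF assms(1,2) datum_inv[OF assms(1,3)]] .

lemma datum_same_fst:
  assumes "group K1" "group K2" "subgroup A K1" "datum K1 K2 A B R" "(a,b) \<in> R" "(a,b') \<in> R"
  shows "b \<otimes>\<^bsub>K2\<^esub> inv\<^bsub>K2\<^esub> b' \<in> B"
proof -
  have "(a \<otimes>\<^bsub>K1\<^esub> inv\<^bsub>K1\<^esub> a, b \<otimes>\<^bsub>K2\<^esub> inv\<^bsub>K2\<^esub> b') \<in> R"
    using datum_diff[OF assms(4,5,6)] .
  moreover have "a \<otimes>\<^bsub>K1\<^esub> inv\<^bsub>K1\<^esub> a = \<one>\<^bsub>K1\<^esub>"
    using datum_carr[OF assms(4,5)] group.r_inv[OF assms(1)] by blast
  ultimately show ?thesis using datum_iff[OF assms(4)] subgroup.one_closed[OF assms(3)] by force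
qed

lemma datum_same_fst':
  assumes "group K1" "group K2" "subgroup A K1" "datum K1 K2 A B R" "(a,b) \<in> R" "(a',b') \<in> R"
    "a' \<otimes>\<^bsub>K1\<^esub> inv\<^bsub>K1\<^esub> a \<in> A"
  shows "b' \<otimes>\<^bsub>K2\<^esub> inv\<^bsub>K2\<^esub> b \<in> B"
  using datum_diff[OF assms(4,6,5)] datum_iff[OF assms(4)] assms(7) by blast


lemma rcosets_img: "rcosets\<^bsub>K\<^esub> N = (\<lambda>a. N #>\<^bsub>K\<^esub> a) ` carrier K"
  by (auto simp: RCOSETS_def)

lemma carrier_Mod: "carrier (K Mod N) = rcosets\<^bsub>K\<^esub> N"
  by (simp add: FactGroup_def)

lemma FN_iff: "N \<in> fin_index_normals K \<longleftrightarrow> N \<lhd> K \<and> finite (rcosets\<^bsub>K\<^esub> N)"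
  by (simp add: fin_index_normals_def carrier_Mod)

lemma rcos_eq_iff:
  assumes "group G" "subgroup H G" "x \<in> carrier G" "y \<in> carrier G"
  shows "H #>\<^bsub>G\<^esub> x = H #>\<^bsub>G\<^esub> y \<longleftrightarrow> x \<otimes>\<^bsub>G\<^esub> inv\<^bsub>G\<^esub> y \<in> H"
proof
  assume "H #>\<^bsub>G\<^esub> x = H #>\<^bsub>G\<^esub> y"
  then have "x \<in> H #>\<^bsub>G\<^esub> y" using group.rcos_self[OF assms(1,3,2)] by simp
  then show "x \<otimes>\<^bsub>G\<^esub> inv\<^bsub>G\<^esub> y \<in> H" using subgroup.rcos_module_imp[OF assms(2,1,4)] by blast
next
  assume "x \<otimes>\<^bsub>G\<^esub> inv\<^bsub>G\<^esub> y \<in> H"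
  then have "x \<in> H #>\<^bsub>G\<^esub> y" using subgroup.rcos_module_rev[OF assms(2,1,4,3)] by blast
  then show "H #>\<^bsub>G\<^esub> x = H #>\<^bsub>G\<^esub> y" using group.repr_independence[OF assms(1) _ assms(4,2)] by simp
qed

lemma card_factor:
  assumes "\<forall>p\<in>XX. \<forall>q\<in>XX. g p = g q \<longrightarrow> f p = f q" "finite (g ` XX)"
  shows "finite (f ` XX) \<and> card (f ` XX) \<le> card (g ` XX)"
proof -
  define h where "h = (\<lambda>y. f (SOME p. p \<in> XX \<and> g p = y))"
  have "f ` XX = h ` (g ` XX)"
  proof (intro equalityI subsetI)
    fix z assume "z \<in> f ` XX"
    then obtain p where p: "p \<in> XX" "z = f p" by blast
    have "\<exists>q. q \<in> XX \<and> g q = g p" using p by blast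
    then have "(SOME q. q \<in> XX \<and> g q = g p) \<in> XX \<and> g (SOME q. q \<in> XX \<and> g q = g p) = g p"
      by (rule someI_ex)
    then have "h (g p) = f p" unfolding h_def using assms(1) p by metis
    then show "z \<in> h ` (g ` XX)" using p by force
  next
    fix z assume "z \<in> h ` (g ` XX)"
    then obtain p where p: "p \<in> XX" "z = h (g p)" by blast
    have "\<exists>q. q \<in> XX \<and> g q = g p" using p by blast
    then have "(SOME q. q \<in> XX \<and> g q = g p) \<in> XX \<and> g (SOME q. q \<in> XX \<and> g q = g p) = g p"
      by (rule someI_ex)
    then have "h (g p) = f p" unfolding h_def using assms(1) p by metis
    then show "z \<in> f ` XX" using p by force
  qed
  then show ?thesis using assms(2) card_image_le by auto
qed

lemma inter_subgroup:
  assumes "group K" "\<forall>N\<in>F. subgroup N K"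
  shows "subgroup (carrier K \<inter> \<Inter>F) K"
proof -
  interpret K: group K by fact
  show ?thesis
  proof (rule K.subgroupI)
    show "carrier K \<inter> \<Inter> F \<noteq> {}" using assms(2) subgroup.one_closed by blast
    show "carrier K \<inter> \<Inter> F \<subseteq> carrier K" by blast
    show "inv\<^bsub>K\<^esub> a \<in> carrier K \<inter> \<Inter> F" if "a \<in> carrier K \<inter> \<Inter> F" for a
      using that assms(2) subgroup.m_inv_closed by fastforce
    show "a \<otimes>\<^bsub>K\<^esub> b \<in> carrier K \<inter> \<Inter> F" if "a \<in> carrier K \<inter> \<Inter> F" "b \<in> carrier K \<inter> \<Inter> F" for a b
      using that assms(2) subgroup.m_closed by fastforce
  qed
qed

lemma inter_normal:
  assumes "group K" "\<forall>N\<in>F. N \<lhd> K"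
  shows "(carrier K \<inter> \<Inter>F) \<lhd> K"
proof -
  interpret K: group K by fact
  have "subgroup (carrier K \<inter> \<Inter>F) K" using inter_subgroup assms normal_imp_subgroup by blast
  moreover have "\<forall>x\<in>carrier K. \<forall>h\<in>carrier K \<inter> \<Inter>F. x \<otimes>\<^bsub>K\<^esub> h \<otimes>\<^bsub>K\<^esub> inv\<^bsub>K\<^esub> x \<in> carrier K \<inter> \<Inter>F"
    using assms(2) K.normal_inv_iff by auto
  ultimately show ?thesis using K.normal_inv_iff by blast
qed

lemma inter_fin_index:
  assumes "group K" "finite F" "\<forall>N\<in>F. subgroup N K \<and> finite (rcosets\<^bsub>K\<^esub> N)"
  shows "finite (rcosets\<^bsub>K\<^esub> (carrier K \<inter> \<Inter>F))"
proof -
  interpret K: group K by fact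
  let ?I = "carrier K \<inter> \<Inter>F"
  have aF: "\<forall>N\<in>F. subgroup N K" using assms(3) by simp
  have sI: "subgroup ?I K" by (rule inter_subgroup[OF assms(1) aF])
  let ?g = "\<lambda>a. \<lambda>N\<in>F. N #>\<^bsub>K\<^esub> a"
  have "?g ` carrier K \<subseteq> (\<Pi>\<^sub>E N\<in>F. rcosets\<^bsub>K\<^esub> N)"
  proof
    fix y assume "y \<in> ?g ` carrier K"
    then obtain a where a: "a \<in> carrier K" "y = ?g a" by blast
    have "N #>\<^bsub>K\<^esub> a \<in> rcosets\<^bsub>K\<^esub> N" if "N \<in> F" for N
      using K.rcosetsI[OF subgroup.subset a(1)] aF that by blast
    then show "y \<in> (\<Pi>\<^sub>E N\<in>F. rcosets\<^bsub>K\<^esub> N)" using a by (simp add: PiE_iff)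
  qed
  then have fin: "finite (?g ` carrier K)"
    using finite_PiE[OF assms(2), of "\<lambda>N. rcosets\<^bsub>K\<^esub> N"] assms(3) finite_subset by blast
  have "\<forall>p\<in>carrier K. \<forall>q\<in>carrier K. ?g p = ?g q \<longrightarrow> ?I #>\<^bsub>K\<^esub> p = ?I #>\<^bsub>K\<^esub> q"
  proof (intro ballI impI)
    fix p q assume pq: "p \<in> carrier K" "q \<in> carrier K" "?g p = ?g q"
    then have "\<forall>N\<in>F. N #>\<^bsub>K\<^esub> p = N #>\<^bsub>K\<^esub> q" by (metis restrict_apply')
    then have "\<forall>N\<in>F. p \<otimes>\<^bsub>K\<^esub> inv\<^bsub>K\<^esub> q \<in> N" using rcos_eq_iff[OF assms(1) _ pq(1,2)] assms(3) by blast
    then have "p \<otimes>\<^bsub>K\<^esub> inv\<^bsub>K\<^esub> q \<in> ?I" using pq by auto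
    then show "?I #>\<^bsub>K\<^esub> p = ?I #>\<^bsub>K\<^esub> q" using rcos_eq_iff[OF assms(1) sI pq(1,2)] by blast
  qed
  from card_factor[OF this fin] show ?thesis by (simp add: rcosets_img)
qed

lemma UU_FN:
  assumes "group K" "finite {N \<in> fin_index_normals K. idx K N \<le> n}"
  shows "UU K n \<in> fin_index_normals K"
proof -
  let ?F = "{N \<in> fin_index_normals K. idx K N \<le> n}"
  have "UU K n = carrier K \<inter> \<Inter>?F" by (simp add: UU_def)
  moreover have "\<forall>N\<in>?F. N \<lhd> K" by (simp add: FN_iff)
  then have "(carrier K \<inter> \<Inter>?F) \<lhd> K" by (rule inter_normal[OF assms(1)])
  moreover have "\<forall>N\<in>?F. subgroup N K \<and> finite (rcosets\<^bsub>K\<^esub> N)"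
    by (auto simp: FN_iff normal_imp_subgroup)
  then have "finite (rcosets\<^bsub>K\<^esub> (carrier K \<inter> \<Inter>?F))"
    by (rule inter_fin_index[OF assms])
  ultimately show ?thesis unfolding FN_iff by simp
qed

lemma UU_sub: "N \<in> fin_index_normals K \<Longrightarrow> idx K N \<le> n \<Longrightarrow> UU K n \<subseteq> N"
  by (auto simp: UU_def)

lemma UU_mono: "n \<le> m \<Longrightarrow> UU K m \<subseteq> UU K n"
  by (auto simp: UU_def)

lemma UU_carrier: "UU K n \<subseteq> carrier K"
  by (auto simp: UU_def)

lemma pullback_normal:
  assumes "group K1" "group K2" "subgroup A K1" "subgroup B K2" "datum K1 K2 A B R" "N \<lhd> K2"
  shows "{a \<in> carrier K1. \<exists>b\<in>N. (a,b) \<in> R} \<lhd> K1"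
proof -
  interpret K1: group K1 by fact
  interpret K2: group K2 by fact
  let ?N' = "{a \<in> carrier K1. \<exists>b\<in>N. (a,b) \<in> R}"
  have sN: "subgroup N K2" using assms(6) normal_imp_subgroup by blast
  have one: "(\<one>\<^bsub>K1\<^esub>, \<one>\<^bsub>K2\<^esub>) \<in> R"
    by (rule datum_AB[OF assms(5) subgroup.one_closed[OF assms(3)] subgroup.one_closed[OF assms(4)]])
  have "subgroup ?N' K1"
  proof (rule K1.subgroupI)
    have "\<one>\<^bsub>K2\<^esub> \<in> N" by (rule subgroup.one_closed[OF sN])
    then have "\<one>\<^bsub>K1\<^esub> \<in> ?N'" using one by auto
    then show "?N' \<noteq> {}" by auto
    show "inv\<^bsub>K1\<^esub> a \<in> ?N'" if aN: "a \<in> ?N'" for a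
    proof -
      obtain b where b: "b \<in> N" "(a,b) \<in> R" using aN by auto
      have "(inv\<^bsub>K1\<^esub> a, inv\<^bsub>K2\<^esub> b) \<in> R" by (rule datum_inv[OF assms(5) b(2)])
      moreover have "inv\<^bsub>K2\<^esub> b \<in> N" by (rule subgroup.m_inv_closed[OF sN b(1)])
      ultimately show ?thesis using aN by auto
    qed
    show "a \<otimes>\<^bsub>K1\<^esub> b \<in> ?N'" if ab: "a \<in> ?N'" "b \<in> ?N'" for a b
    proof -
      obtain c where c: "c \<in> N" "(a,c) \<in> R" using ab by auto
      obtain d where d: "d \<in> N" "(b,d) \<in> R" using ab by auto
      have "(a \<otimes>\<^bsub>K1\<^esub> b, c \<otimes>\<^bsub>K2\<^esub> d) \<in> R" by (rule datum_mult[OF assms(5) c(2) d(2)])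
      moreover have "c \<otimes>\<^bsub>K2\<^esub> d \<in> N" by (rule subgroup.m_closed[OF sN c(1) d(1)])
      moreover have "a \<otimes>\<^bsub>K1\<^esub> b \<in> carrier K1" using ab by auto
      ultimately show ?thesis by auto
    qed
  qed auto
  moreover have "\<forall>x\<in>carrier K1. \<forall>h\<in>?N'. x \<otimes>\<^bsub>K1\<^esub> h \<otimes>\<^bsub>K1\<^esub> inv\<^bsub>K1\<^esub> x \<in> ?N'"
  proof (intro ballI)
    fix x h assume x: "x \<in> carrier K1" and h: "h \<in> ?N'"
    obtain b where b: "b \<in> N" "(h,b) \<in> R" using h by auto
    obtain y where y: "(x,y) \<in> R" using datum_fst[OF assms(5) x] by auto
    have "(x \<otimes>\<^bsub>K1\<^esub> h \<otimes>\<^bsub>K1\<^esub> inv\<^bsub>K1\<^esub> x, y \<otimes>\<^bsub>K2\<^esub> b \<otimes>\<^bsub>K2\<^esub> inv\<^bsub>K2\<^esub> y) \<in> R"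
      using datum_mult[OF assms(5) datum_mult[OF assms(5) y b(2)] datum_inv[OF assms(5) y]] .
    moreover have "\<forall>x\<in>carrier K2. \<forall>h\<in>N. x \<otimes>\<^bsub>K2\<^esub> h \<otimes>\<^bsub>K2\<^esub> inv\<^bsub>K2\<^esub> x \<in> N"
      using assms(6) K2.normal_inv_iff by auto
    then have "y \<otimes>\<^bsub>K2\<^esub> b \<otimes>\<^bsub>K2\<^esub> inv\<^bsub>K2\<^esub> y \<in> N"
      using datum_carr[OF assms(5) y] b(1) by auto
    moreover have "x \<otimes>\<^bsub>K1\<^esub> h \<otimes>\<^bsub>K1\<^esub> inv\<^bsub>K1\<^esub> x \<in> carrier K1" using x h by auto
    ultimately show "x \<otimes>\<^bsub>K1\<^esub> h \<otimes>\<^bsub>K1\<^esub> inv\<^bsub>K1\<^esub> x \<in> ?N'" by auto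
  qed
  ultimately show ?thesis using K1.normal_inv_iff by auto
qed

lemma pullback_iff:
  assumes "group K1" "group K2" "subgroup A K1" "subgroup B K2" "datum K1 K2 A B R" "N \<lhd> K2" "B \<subseteq> N"
    "(a,b) \<in> R"
  shows "a \<in> {a \<in> carrier K1. \<exists>b\<in>N. (a,b) \<in> R} \<longleftrightarrow> b \<in> N"
proof
  assume "a \<in> {a \<in> carrier K1. \<exists>b\<in>N. (a,b) \<in> R}"
  then obtain b' where b': "b' \<in> N" "(a,b') \<in> R" by blast
  have "b' \<otimes>\<^bsub>K2\<^esub> inv\<^bsub>K2\<^esub> b \<in> B" using datum_same_fst[OF assms(1-3,5) b'(2) assms(8)] .
  then have "b' \<otimes>\<^bsub>K2\<^esub> inv\<^bsub>K2\<^esub> b \<in> N" using assms(7) by blast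
  moreover have sN: "subgroup N K2" using assms(6) normal_imp_subgroup by blast
  moreover have bc: "b \<in> carrier K2" "b' \<in> carrier K2" using datum_carr[OF assms(5)] b' assms(8) by auto
  ultimately have "N #>\<^bsub>K2\<^esub> b' = N #>\<^bsub>K2\<^esub> b" using rcos_eq_iff[OF assms(2) sN bc(2,1)] by blast
  moreover have "N #>\<^bsub>K2\<^esub> b' = N" using subgroup.rcos_const[OF sN assms(2) b'(1)] .
  ultimately have "N #>\<^bsub>K2\<^esub> b = N" by simp
  then show "b \<in> N" using group.coset_join1[OF assms(2) _ bc(1) sN] by blast
next
  assume "b \<in> N" then show "a \<in> {a \<in> carrier K1. \<exists>b\<in>N. (a,b) \<in> R}"
    using assms(8) datum_carr[OF assms(5) assms(8)] by blast
qed

lemma pullback_index: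
  assumes "group K1" "group K2" "subgroup A K1" "subgroup B K2" "datum K1 K2 A B R" "N \<lhd> K2"
    "finite (rcosets\<^bsub>K2\<^esub> N)"
  shows "finite (rcosets\<^bsub>K1\<^esub> {a \<in> carrier K1. \<exists>b\<in>N. (a,b) \<in> R}) \<and>
         card (rcosets\<^bsub>K1\<^esub> {a \<in> carrier K1. \<exists>b\<in>N. (a,b) \<in> R}) \<le> card (rcosets\<^bsub>K2\<^esub> N)"
proof -
  let ?N' = "{a \<in> carrier K1. \<exists>b\<in>N. (a,b) \<in> R}"
  have sN: "subgroup N K2" using assms(6) normal_imp_subgroup by blast
  have sN': "subgroup ?N' K1" using pullback_normal[OF assms(1-6)] normal_imp_subgroup by blast
  have fR: "fst ` R = carrier K1" "snd ` R = carrier K2" using assms(5) unfolding datum_def by blast+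
  have e1: "rcosets\<^bsub>K1\<^esub> ?N' = (\<lambda>p. ?N' #>\<^bsub>K1\<^esub> fst p) ` R"
    unfolding rcosets_img fR(1)[symmetric] image_image by (rule refl)
  have e2: "rcosets\<^bsub>K2\<^esub> N = (\<lambda>p. N #>\<^bsub>K2\<^esub> snd p) ` R"
    unfolding rcosets_img fR(2)[symmetric] image_image by (rule refl)
  have "\<forall>p\<in>R. \<forall>q\<in>R. N #>\<^bsub>K2\<^esub> snd p = N #>\<^bsub>K2\<^esub> snd q \<longrightarrow> ?N' #>\<^bsub>K1\<^esub> fst p = ?N' #>\<^bsub>K1\<^esub> fst q"
  proof (intro ballI impI)
    fix p q assume p: "p \<in> R" and q: "q \<in> R" and e: "N #>\<^bsub>K2\<^esub> snd p = N #>\<^bsub>K2\<^esub> snd q"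
    obtain a b where ab: "p = (a,b)" by (cases p)
    obtain a' b' where ab': "q = (a',b')" by (cases q)
    have c: "a \<in> carrier K1" "a' \<in> carrier K1" "b \<in> carrier K2" "b' \<in> carrier K2"
      using datum_carr[OF assms(5)] p q ab ab' by auto
    have "b \<otimes>\<^bsub>K2\<^esub> inv\<^bsub>K2\<^esub> b' \<in> N" using e rcos_eq_iff[OF assms(2) sN c(3,4)] ab ab' by simp
    moreover have "(a \<otimes>\<^bsub>K1\<^esub> inv\<^bsub>K1\<^esub> a', b \<otimes>\<^bsub>K2\<^esub> inv\<^bsub>K2\<^esub> b') \<in> R"
      using datum_diff[OF assms(5)] p q ab ab' by simp
    ultimately have "a \<otimes>\<^bsub>K1\<^esub> inv\<^bsub>K1\<^esub> a' \<in> ?N'" using datum_carr[OF assms(5)] by blast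
    then show "?N' #>\<^bsub>K1\<^esub> fst p = ?N' #>\<^bsub>K1\<^esub> fst q"
      using rcos_eq_iff[OF assms(1) sN' c(1,2)] ab ab' by simp
  qed
  moreover have "finite ((\<lambda>p. N #>\<^bsub>K2\<^esub> snd p) ` R)" using assms(7) unfolding e2 .
  ultimately have "finite ((\<lambda>p. ?N' #>\<^bsub>K1\<^esub> fst p) ` R) \<and>
     card ((\<lambda>p. ?N' #>\<^bsub>K1\<^esub> fst p) ` R) \<le> card ((\<lambda>p. N #>\<^bsub>K2\<^esub> snd p) ` R)"
    by (rule card_factor)
  then show ?thesis unfolding e1 e2 .
qed


lemma coset_mem_sub:
  assumes "group G" "subgroup H G" "x \<in> carrier G" "y \<in> H #>\<^bsub>G\<^esub> x"
  shows "y \<in> H \<longleftrightarrow> x \<in> H"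
proof
  assume y: "y \<in> H"
  have "H #>\<^bsub>G\<^esub> x = H #>\<^bsub>G\<^esub> y" by (rule group.repr_independence[OF assms(1) assms(4) assms(3) assms(2)])
  also have "\<dots> = H" by (rule group.coset_join2[OF assms(1) subgroup.mem_carrier[OF assms(2) y] assms(2) y])
  finally have "H #>\<^bsub>G\<^esub> x = H" .
  then show "x \<in> H" using group.rcos_self[OF assms(1) assms(3) assms(2)] by simp
next
  assume x: "x \<in> H"
  have "H #>\<^bsub>G\<^esub> x = H" by (rule group.coset_join2[OF assms(1) assms(3) assms(2) x])
  then show "y \<in> H" using assms(4) by simp
qed

lemma key_dir:
  assumes "group K1" "group K2" "subgroup A K1" "subgroup B K2" "datum K1 K2 A B R"
    "finite {N \<in> fin_index_normals K1. idx K1 N \<le> n}"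
    "B \<subseteq> UU K2 n" "(a,b) \<in> R" "a \<in> UU K1 n"
  shows "b \<in> UU K2 n"
proof -
  have bc: "b \<in> carrier K2" using datum_carr[OF assms(5,8)] by simp
  have "b \<in> N" if N: "N \<in> fin_index_normals K2" "idx K2 N \<le> n" for N
  proof -
    let ?N' = "{a \<in> carrier K1. \<exists>b\<in>N. (a,b) \<in> R}"
    have nN: "N \<lhd> K2" and fN: "finite (rcosets\<^bsub>K2\<^esub> N)" using N(1) by (auto simp: FN_iff)
    have BN: "B \<subseteq> N" using assms(7) UU_sub[OF N] by blast
    have n1: "?N' \<lhd> K1" by (rule pullback_normal[OF assms(1-5) nN])
    have n2: "finite (rcosets\<^bsub>K1\<^esub> ?N') \<and> card (rcosets\<^bsub>K1\<^esub> ?N') \<le> card (rcosets\<^bsub>K2\<^esub> N)"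
      by (rule pullback_index[OF assms(1-5) nN fN])
    have "?N' \<in> fin_index_normals K1" using n1 n2 by (simp add: FN_iff)
    moreover have "idx K1 ?N' \<le> n" using n2 N(2) unfolding idx_def by linarith
    ultimately have "UU K1 n \<subseteq> ?N'" by (rule UU_sub)
    then have "a \<in> ?N'" using assms(9) by blast
    then show "b \<in> N" using pullback_iff[OF assms(1-5) nN BN assms(8)] by blast
  qed
  then show ?thesis using bc unfolding UU_def by blast
qed

lemma key:
  assumes "group K1" "group K2" "subgroup A K1" "subgroup B K2" "datum K1 K2 A B R"
    "finite {N \<in> fin_index_normals K1. idx K1 N \<le> n}"
    "finite {N \<in> fin_index_normals K2. idx K2 N \<le> n}"
    "A \<subseteq> UU K1 n" "B \<subseteq> UU K2 n" "(a,b) \<in> R"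
  shows "a \<in> UU K1 n \<longleftrightarrow> b \<in> UU K2 n"
proof
  assume "a \<in> UU K1 n" then show "b \<in> UU K2 n" by (rule key_dir[OF assms(1-6,9,10)])
next
  assume b: "b \<in> UU K2 n"
  have "(b,a) \<in> R\<inverse>" using assms(10) by simp
  show "a \<in> UU K1 n" by (rule key_dir[OF assms(2,1,4,3) datum_conv[OF assms(5)] assms(7,8) \<open>(b,a) \<in> R\<inverse>\<close> b])
qed

lemma restr_datum:
  assumes "group K1" "group K2" "subgroup A K1" "subgroup B K2" "datum K1 K2 A B R"
    "A' \<lhd> K1" "B' \<lhd> K2" "A \<subseteq> A'" "B \<subseteq> B'"
    "\<forall>a b. (a,b) \<in> R \<longrightarrow> (a \<in> A' \<longleftrightarrow> b \<in> B')"
  shows "datum K1 K2 A' B' (restr K1 K2 A' B' R)" "R \<subseteq> restr K1 K2 A' B' R"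
proof -
  interpret K1: group K1 by fact
  interpret K2: group K2 by fact
  interpret A': normal A' K1 by fact
  interpret B': normal B' K2 by fact
  have sA': "subgroup A' K1" and sB': "subgroup B' K2" using assms(6,7) normal_imp_subgroup by auto
  let ?S = "restr K1 K2 A' B' R"
  show RS: "R \<subseteq> ?S"
  proof
    fix p assume p: "p \<in> R"
    obtain a b where ab: "p = (a,b)" by (cases p)
    have c: "a \<in> carrier K1" "b \<in> carrier K2" using datum_carr[OF assms(5)] p ab by auto
    have "a \<in> A' #>\<^bsub>K1\<^esub> a" by (rule K1.rcos_self[OF c(1) sA'])
    moreover have "b \<in> B' #>\<^bsub>K2\<^esub> b" by (rule K2.rcos_self[OF c(2) sB'])
    ultimately show "p \<in> ?S" using p ab c unfolding restr_def by blast
  qed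
  have one: "(\<one>\<^bsub>K1\<^esub>, \<one>\<^bsub>K2\<^esub>) \<in> R"
    by (rule datum_AB[OF assms(5) subgroup.one_closed[OF assms(3)] subgroup.one_closed[OF assms(4)]])
  have sub: "?S \<subseteq> carrier K1 \<times> carrier K2" unfolding restr_def by auto
  have mult: "\<forall>a b a' b'. (a,b) \<in> ?S \<longrightarrow> (a',b') \<in> ?S \<longrightarrow> (a \<otimes>\<^bsub>K1\<^esub> a', b \<otimes>\<^bsub>K2\<^esub> b') \<in> ?S"
  proof (intro allI impI)
    fix a b a' b' assume ab: "(a,b) \<in> ?S" and ab': "(a',b') \<in> ?S"
    obtain a0 b0 where w: "(a0,b0) \<in> R" "a \<in> A' #>\<^bsub>K1\<^esub> a0" "b \<in> B' #>\<^bsub>K2\<^esub> b0"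
      and c: "a \<in> carrier K1" "b \<in> carrier K2" using ab unfolding restr_def by blast
    obtain a1 b1 where w': "(a1,b1) \<in> R" "a' \<in> A' #>\<^bsub>K1\<^esub> a1" "b' \<in> B' #>\<^bsub>K2\<^esub> b1"
      and c': "a' \<in> carrier K1" "b' \<in> carrier K2" using ab' unfolding restr_def by blast
    have c0: "a0 \<in> carrier K1" "b0 \<in> carrier K2" "a1 \<in> carrier K1" "b1 \<in> carrier K2"
      using datum_carr[OF assms(5)] w(1) w'(1) by auto
    have "a \<otimes>\<^bsub>K1\<^esub> a' \<in> (A' #>\<^bsub>K1\<^esub> a0) <#>\<^bsub>K1\<^esub> (A' #>\<^bsub>K1\<^esub> a1)"
      using w(2) w'(2) unfolding set_mult_def by blast
    then have 1: "a \<otimes>\<^bsub>K1\<^esub> a' \<in> A' #>\<^bsub>K1\<^esub> (a0 \<otimes>\<^bsub>K1\<^esub> a1)" using A'.rcos_sum c0 by simp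
    have "b \<otimes>\<^bsub>K2\<^esub> b' \<in> (B' #>\<^bsub>K2\<^esub> b0) <#>\<^bsub>K2\<^esub> (B' #>\<^bsub>K2\<^esub> b1)"
      using w(3) w'(3) unfolding set_mult_def by blast
    then have 2: "b \<otimes>\<^bsub>K2\<^esub> b' \<in> B' #>\<^bsub>K2\<^esub> (b0 \<otimes>\<^bsub>K2\<^esub> b1)" using B'.rcos_sum c0 by simp
    have "(a0 \<otimes>\<^bsub>K1\<^esub> a1, b0 \<otimes>\<^bsub>K2\<^esub> b1) \<in> R" by (rule datum_mult[OF assms(5) w(1) w'(1)])
    then show "(a \<otimes>\<^bsub>K1\<^esub> a', b \<otimes>\<^bsub>K2\<^esub> b') \<in> ?S" using 1 2 c c' unfolding restr_def by blast
  qed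
  have inv: "\<forall>a b. (a,b) \<in> ?S \<longrightarrow> (inv\<^bsub>K1\<^esub> a, inv\<^bsub>K2\<^esub> b) \<in> ?S"
  proof (intro allI impI)
    fix a b assume ab: "(a,b) \<in> ?S"
    obtain a0 b0 where w: "(a0,b0) \<in> R" "a \<in> A' #>\<^bsub>K1\<^esub> a0" "b \<in> B' #>\<^bsub>K2\<^esub> b0"
      and c: "a \<in> carrier K1" "b \<in> carrier K2" using ab unfolding restr_def by blast
    have c0: "a0 \<in> carrier K1" "b0 \<in> carrier K2" using datum_carr[OF assms(5)] w(1) by auto
    have "inv\<^bsub>K1\<^esub> a \<in> set_inv\<^bsub>K1\<^esub> (A' #>\<^bsub>K1\<^esub> a0)" using w(2) unfolding SET_INV_def by blast
    then have 1: "inv\<^bsub>K1\<^esub> a \<in> A' #>\<^bsub>K1\<^esub> inv\<^bsub>K1\<^esub> a0" using A'.rcos_inv c0 by simp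
    have "inv\<^bsub>K2\<^esub> b \<in> set_inv\<^bsub>K2\<^esub> (B' #>\<^bsub>K2\<^esub> b0)" using w(3) unfolding SET_INV_def by blast
    then have 2: "inv\<^bsub>K2\<^esub> b \<in> B' #>\<^bsub>K2\<^esub> inv\<^bsub>K2\<^esub> b0" using B'.rcos_inv c0 by simp
    have "(inv\<^bsub>K1\<^esub> a0, inv\<^bsub>K2\<^esub> b0) \<in> R" by (rule datum_inv[OF assms(5) w(1)])
    then show "(inv\<^bsub>K1\<^esub> a, inv\<^bsub>K2\<^esub> b) \<in> ?S" using 1 2 c unfolding restr_def by auto
  qed
  have f1: "fst ` ?S = carrier K1"
  proof
    show "fst ` ?S \<subseteq> carrier K1" using sub by auto
    have "carrier K1 = fst ` R" using assms(5) unfolding datum_def by auto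
    also have "\<dots> \<subseteq> fst ` ?S" using RS by auto
    finally show "carrier K1 \<subseteq> fst ` ?S" .
  qed
  have f2: "snd ` ?S = carrier K2"
  proof
    show "snd ` ?S \<subseteq> carrier K2" using sub by auto
    have "carrier K2 = snd ` R" using assms(5) unfolding datum_def by auto
    also have "\<dots> \<subseteq> snd ` ?S" using RS by auto
    finally show "carrier K2 \<subseteq> snd ` ?S" .
  qed
  have AB: "A' \<times> B' \<subseteq> ?S"
  proof
    fix p assume "p \<in> A' \<times> B'"
    then obtain a b where ab: "p = (a,b)" "a \<in> A'" "b \<in> B'" by blast
    have c: "a \<in> carrier K1" "b \<in> carrier K2" using ab sA' sB' subgroup.mem_carrier by metis+
    have "a \<in> A' #>\<^bsub>K1\<^esub> \<one>\<^bsub>K1\<^esub>" using ab(2) K1.coset_mult_one[OF subgroup.subset[OF sA']] by simp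
    moreover have "b \<in> B' #>\<^bsub>K2\<^esub> \<one>\<^bsub>K2\<^esub>" using ab(3) K2.coset_mult_one[OF subgroup.subset[OF sB']] by simp
    ultimately show "p \<in> ?S" using one c ab(1) unfolding restr_def by blast
  qed
  have iff: "\<forall>a b. (a,b) \<in> ?S \<longrightarrow> (a \<in> A' \<longleftrightarrow> b \<in> B')"
  proof (intro allI impI)
    fix a b assume ab: "(a,b) \<in> ?S"
    obtain a0 b0 where w: "(a0,b0) \<in> R" "a \<in> A' #>\<^bsub>K1\<^esub> a0" "b \<in> B' #>\<^bsub>K2\<^esub> b0"
      using ab unfolding restr_def by blast
    have c0: "a0 \<in> carrier K1" "b0 \<in> carrier K2" using datum_carr[OF assms(5)] w(1) by auto
    have "a \<in> A' \<longleftrightarrow> a0 \<in> A'" by (rule coset_mem_sub[OF assms(1) sA' c0(1) w(2)])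
    also have "\<dots> \<longleftrightarrow> b0 \<in> B'" using assms(10) w(1) by blast
    also have "\<dots> \<longleftrightarrow> b \<in> B'" using coset_mem_sub[OF assms(2) sB' c0(2) w(3)] by simp
    finally show "a \<in> A' \<longleftrightarrow> b \<in> B'" .
  qed
  show "datum K1 K2 A' B' ?S" unfolding datum_def using sub mult inv f1 f2 AB iff by blast
qed

lemma datum_le:
  assumes "group K1" "group K2" "subgroup A K1" "datum K1 K2 A B Q"
    "subgroup A' K1" "datum K1 K2 A' B' R" "B \<subseteq> B'" "P \<subseteq> Q" "P \<subseteq> R" "fst ` P = carrier K1"
  shows "Q \<subseteq> R"
proof
  interpret K2: group K2 by fact
  fix p assume p: "p \<in> Q"
  obtain a b where ab: "p = (a,b)" by (cases p)
  have "a \<in> fst ` P" using datum_carr[OF assms(4)] p ab assms(10) by auto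
  then obtain b' where b': "(a,b') \<in> P" by force
  have c: "b \<in> carrier K2" "b' \<in> carrier K2" using datum_carr[OF assms(4)] p ab b' assms(8) by auto
  have "b \<otimes>\<^bsub>K2\<^esub> inv\<^bsub>K2\<^esub> b' \<in> B" using datum_same_fst[OF assms(1-4)] p ab b' assms(8) by blast
  then have "(\<one>\<^bsub>K1\<^esub>, b \<otimes>\<^bsub>K2\<^esub> inv\<^bsub>K2\<^esub> b') \<in> R"
    using datum_AB[OF assms(6) subgroup.one_closed[OF assms(5)]] assms(7) by blast
  from datum_mult[OF assms(6) this] b' assms(9)
  have "(\<one>\<^bsub>K1\<^esub> \<otimes>\<^bsub>K1\<^esub> a, b \<otimes>\<^bsub>K2\<^esub> inv\<^bsub>K2\<^esub> b' \<otimes>\<^bsub>K2\<^esub> b') \<in> R" by blast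
  moreover have "\<one>\<^bsub>K1\<^esub> \<otimes>\<^bsub>K1\<^esub> a = a"
    using monoid.l_one[OF group.is_monoid[OF assms(1)]] datum_carr[OF assms(4)] p ab by auto
  moreover have "b \<otimes>\<^bsub>K2\<^esub> inv\<^bsub>K2\<^esub> b' \<otimes>\<^bsub>K2\<^esub> b' = b" using c by (simp add: K2.m_assoc)
  ultimately show "p \<in> R" using ab by simp
qed

lemma datum_finite:
  assumes "group K1" "group K2" "subgroup A K1" "subgroup B K2"
    "finite (rcosets\<^bsub>K1\<^esub> A)" "finite (rcosets\<^bsub>K2\<^esub> B)"
  shows "finite {R. datum K1 K2 A B R}"
proof -
  interpret K1: group K1 by fact
  interpret K2: group K2 by fact
  define f where "f = (\<lambda>R. (\<lambda>p. (A #>\<^bsub>K1\<^esub> fst p, B #>\<^bsub>K2\<^esub> snd p)) ` R)"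
  have char: "R = {p. fst p \<in> carrier K1 \<and> snd p \<in> carrier K2 \<and> (A #>\<^bsub>K1\<^esub> fst p, B #>\<^bsub>K2\<^esub> snd p) \<in> f R}"
    if R: "datum K1 K2 A B R" for R
  proof
    show "R \<subseteq> {p. fst p \<in> carrier K1 \<and> snd p \<in> carrier K2 \<and> (A #>\<^bsub>K1\<^esub> fst p, B #>\<^bsub>K2\<^esub> snd p) \<in> f R}"
      using datum_carr[OF R] unfolding f_def by force
  next
    show "{p. fst p \<in> carrier K1 \<and> snd p \<in> carrier K2 \<and> (A #>\<^bsub>K1\<^esub> fst p, B #>\<^bsub>K2\<^esub> snd p) \<in> f R} \<subseteq> R"
    proof
      fix p assume p: "p \<in> {p. fst p \<in> carrier K1 \<and> snd p \<in> carrier K2 \<and> (A #>\<^bsub>K1\<^esub> fst p, B #>\<^bsub>K2\<^esub> snd p) \<in> f R}"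
      obtain a b where ab: "p = (a,b)" by (cases p)
      have c: "a \<in> carrier K1" "b \<in> carrier K2" using p ab by auto
      obtain q where q: "q \<in> R" "A #>\<^bsub>K1\<^esub> a = A #>\<^bsub>K1\<^esub> fst q" "B #>\<^bsub>K2\<^esub> b = B #>\<^bsub>K2\<^esub> snd q"
        using p ab unfolding f_def by auto
      obtain a' b' where ab': "q = (a',b')" by (cases q)
      have c': "a' \<in> carrier K1" "b' \<in> carrier K2" using datum_carr[OF R] q(1) ab' by auto
      have "a \<otimes>\<^bsub>K1\<^esub> inv\<^bsub>K1\<^esub> a' \<in> A" using rcos_eq_iff[OF assms(1,3) c(1) c'(1)] q(2) ab' by simp
      moreover have "b \<otimes>\<^bsub>K2\<^esub> inv\<^bsub>K2\<^esub> b' \<in> B" using rcos_eq_iff[OF assms(2,4) c(2) c'(2)] q(3) ab' by simp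
      ultimately have "(a \<otimes>\<^bsub>K1\<^esub> inv\<^bsub>K1\<^esub> a', b \<otimes>\<^bsub>K2\<^esub> inv\<^bsub>K2\<^esub> b') \<in> R" by (rule datum_AB[OF R])
      from datum_mult[OF R this] q(1) ab'
      have "(a \<otimes>\<^bsub>K1\<^esub> inv\<^bsub>K1\<^esub> a' \<otimes>\<^bsub>K1\<^esub> a', b \<otimes>\<^bsub>K2\<^esub> inv\<^bsub>K2\<^esub> b' \<otimes>\<^bsub>K2\<^esub> b') \<in> R" by blast
      then show "p \<in> R" using c c' ab by (simp add: K1.m_assoc K2.m_assoc)
    qed
  qed
  have inj: "inj_on f {R. datum K1 K2 A B R}"
  proof (rule inj_onI)
    fix R R' assume "R \<in> {R. datum K1 K2 A B R}" "R' \<in> {R. datum K1 K2 A B R}" "f R = f R'"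
    then have d: "datum K1 K2 A B R" and d': "datum K1 K2 A B R'" and e: "f R = f R'" by auto
    define S where "S = (\<lambda>XS. {p. fst p \<in> carrier K1 \<and> snd p \<in> carrier K2 \<and> (A #>\<^bsub>K1\<^esub> fst p, B #>\<^bsub>K2\<^esub> snd p) \<in> XS})"
    have "R = S (f R)" unfolding S_def by (rule char[OF d])
    also have "\<dots> = S (f R')" by (simp only: e)
    also have "\<dots> = R'" unfolding S_def by (rule char[OF d', symmetric])
    finally show "R = R'" .
  qed
  have "f ` {R. datum K1 K2 A B R} \<subseteq> Pow ((rcosets\<^bsub>K1\<^esub> A) \<times> (rcosets\<^bsub>K2\<^esub> B))"
  proof
    fix XX assume "XX \<in> f ` {R. datum K1 K2 A B R}"
    then obtain R where R: "datum K1 K2 A B R" "XX = f R" by blast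
    have "(A #>\<^bsub>K1\<^esub> fst p, B #>\<^bsub>K2\<^esub> snd p) \<in> (rcosets\<^bsub>K1\<^esub> A) \<times> (rcosets\<^bsub>K2\<^esub> B)" if "p \<in> R" for p
      using datum_carr[OF R(1)] that K1.rcosetsI[OF subgroup.subset[OF assms(3)]] K2.rcosetsI[OF subgroup.subset[OF assms(4)]]
      by (metis SigmaI prod.collapse)
    then show "XX \<in> Pow ((rcosets\<^bsub>K1\<^esub> A) \<times> (rcosets\<^bsub>K2\<^esub> B))" using R(2) unfolding f_def by auto
  qed
  moreover have "finite (Pow ((rcosets\<^bsub>K1\<^esub> A) \<times> (rcosets\<^bsub>K2\<^esub> B)))" using assms(5,6) by simp
  ultimately have "finite (f ` {R. datum K1 K2 A B R})" by (rule finite_subset)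
  then show ?thesis using inj finite_imageD by blast
qed


definition goodk :: "(nat \<Rightarrow> 'r set set) \<Rightarrow> nat \<Rightarrow> 'r set \<Rightarrow> bool" where
  "goodk Lev k Q \<longleftrightarrow> Q \<in> Lev k \<and> (\<forall>m\<ge>k. \<exists>P\<in>Lev m. P \<subseteq> Q)"

lemma koenig_step:
  fixes Lev :: "nat \<Rightarrow> 'r set set"
  assumes fin: "finite (Lev k)"
    and H2: "\<And>n m P. n \<le> m \<Longrightarrow> P \<in> Lev m \<Longrightarrow> \<exists>Q\<in>Lev n. P \<subseteq> Q"
    and H3: "\<And>n m p P Q R. n \<le> m \<Longrightarrow> m \<le> p \<Longrightarrow> P \<in> Lev p \<Longrightarrow> Q \<in> Lev m \<Longrightarrow> R \<in> Lev n \<Longrightarrow>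
               P \<subseteq> Q \<Longrightarrow> P \<subseteq> R \<Longrightarrow> Q \<subseteq> R"
    and ex: "\<forall>m\<ge>k. \<exists>P\<in>Lev m. P \<subseteq> R"
    and sub: "\<forall>m\<ge>k. \<forall>P\<in>Lev m. \<forall>Q\<in>Lev k. P \<subseteq> R \<longrightarrow> P \<subseteq> Q \<longrightarrow> Q \<subseteq> R"
  shows "\<exists>Q. goodk Lev k Q \<and> Q \<subseteq> R"
proof -
  define PP where "PP = (\<lambda>m. SOME P. P \<in> Lev m \<and> P \<subseteq> R)"
  have PP: "PP m \<in> Lev m \<and> PP m \<subseteq> R" if "m \<ge> k" for m
    unfolding PP_def using ex that by (metis (mono_tags, lifting) someI_ex)
  define QQ where "QQ = (\<lambda>m. SOME Q. Q \<in> Lev k \<and> PP m \<subseteq> Q)"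
  have QQ: "QQ m \<in> Lev k \<and> PP m \<subseteq> QQ m" if "m \<ge> k" for m
  proof -
    have "\<exists>Q\<in>Lev k. PP m \<subseteq> Q" using H2[of k m "PP m"] PP[OF that] that by blast
    then show ?thesis unfolding QQ_def by (metis (mono_tags, lifting) someI_ex)
  qed
  let ?A = "{m. m \<ge> k}"
  have "\<forall>m. \<exists>n\<ge>m. k \<le> n" by (metis max.cobounded1 max.cobounded2)
  then have infA: "\<not> finite ?A" by (simp add: infinite_nat_iff_unbounded_le)
  have "QQ ` ?A \<subseteq> Lev k" using QQ by auto
  then have "finite (QQ ` ?A)" using fin finite_subset by blast
  from pigeonhole_infinite[OF infA this] obtain m0 where m0: "m0 \<in> ?A" "\<not> finite {m \<in> ?A. QQ m = QQ m0}"
    by blast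
  let ?Q = "QQ m0"
  have "goodk Lev k ?Q"
    unfolding goodk_def
  proof (intro conjI allI impI)
    show "?Q \<in> Lev k" using QQ m0(1) by auto
    fix m1 assume m1: "k \<le> m1"
    obtain m where m: "m \<ge> m1" "m \<in> {m \<in> ?A. QQ m = QQ m0}"
      using m0(2) unfolding infinite_nat_iff_unbounded_le by blast
    have mk: "m \<ge> k" using m by auto
    have P1: "PP m \<in> Lev m" "PP m \<subseteq> ?Q" using PP[OF mk] QQ[OF mk] m(2) by auto
    obtain Q' where Q': "Q' \<in> Lev m1" "PP m \<subseteq> Q'" using H2[OF m(1) P1(1)] by blast
    have "Q' \<subseteq> ?Q" using H3[OF m1 m(1) P1(1) Q'(1) _ Q'(2) P1(2)] QQ m0(1) by auto
    then show "\<exists>P\<in>Lev m1. P \<subseteq> ?Q" using Q'(1) by blast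
  qed
  moreover have "?Q \<subseteq> R"
    using sub PP[of m0] QQ[of m0] m0(1) by auto
  ultimately show ?thesis by blast
qed

primrec kseq :: "(nat \<Rightarrow> 'r set \<Rightarrow> bool) \<Rightarrow> nat \<Rightarrow> 'r set" where
  "kseq G 0 = (SOME Q. G 0 Q)"
| "kseq G (Suc n) = (SOME Q. G (Suc n) Q \<and> Q \<subseteq> kseq G n)"

lemma kseq_suc:
  assumes "\<And>k R. G k R \<Longrightarrow> \<exists>Q. G (Suc k) Q \<and> Q \<subseteq> R" "G n (kseq G n)"
  shows "G (Suc n) (kseq G (Suc n)) \<and> kseq G (Suc n) \<subseteq> kseq G n"
proof -
  have "\<exists>Q. G (Suc n) Q \<and> Q \<subseteq> kseq G n" using assms(1)[OF assms(2)] .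
  then show ?thesis by (simp only: kseq.simps) (rule someI_ex)
qed

lemma kseq_good:
  assumes "\<exists>Q. G 0 Q" "\<And>k R. G k R \<Longrightarrow> \<exists>Q. G (Suc k) Q \<and> Q \<subseteq> R"
  shows "G n (kseq G n) \<and> kseq G (Suc n) \<subseteq> kseq G n"
proof -
  have g: "G n (kseq G n)" for n
  proof (induction n)
    case 0
    show ?case using assms(1) by (simp only: kseq.simps) (rule someI_ex)
  next
    case (Suc n)
    then show ?case using kseq_suc[of G, OF assms(2)] by blast
  qed
  show ?thesis using g kseq_suc[of G, OF assms(2) g] by blast
qed

lemma koenig:
  fixes Lev :: "nat \<Rightarrow> 'r set set"
  assumes fin: "\<And>n. finite (Lev n)" and ne: "\<And>n. Lev n \<noteq> {}"
    and H2: "\<And>n m P. n \<le> m \<Longrightarrow> P \<in> Lev m \<Longrightarrow> \<exists>Q\<in>Lev n. P \<subseteq> Q"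
    and H3: "\<And>n m p P Q R. n \<le> m \<Longrightarrow> m \<le> p \<Longrightarrow> P \<in> Lev p \<Longrightarrow> Q \<in> Lev m \<Longrightarrow> R \<in> Lev n \<Longrightarrow>
               P \<subseteq> Q \<Longrightarrow> P \<subseteq> R \<Longrightarrow> Q \<subseteq> R"
  shows "\<exists>Rs. \<forall>n. Rs n \<in> Lev n \<and> Rs (Suc n) \<subseteq> Rs n"
proof -
  have A: "\<exists>Q. goodk Lev 0 Q"
  proof -
    have "\<exists>Q. goodk Lev 0 Q \<and> Q \<subseteq> UNIV"
      by (rule koenig_step[OF fin H2 H3]) (use ne in auto)
    then show ?thesis by blast
  qed
  have B: "\<exists>Q. goodk Lev (Suc k) Q \<and> Q \<subseteq> R" if g: "goodk Lev k R" for k R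
  proof (rule koenig_step[OF fin H2 H3])
    show "\<forall>m\<ge>Suc k. \<exists>P\<in>Lev m. P \<subseteq> R" using g unfolding goodk_def by auto
    show "\<forall>m\<ge>Suc k. \<forall>P\<in>Lev m. \<forall>Q\<in>Lev (Suc k). P \<subseteq> R \<longrightarrow> P \<subseteq> Q \<longrightarrow> Q \<subseteq> R"
    proof (intro allI impI ballI)
      fix m P Q assume "Suc k \<le> m" "P \<in> Lev m" "Q \<in> Lev (Suc k)" "P \<subseteq> R" "P \<subseteq> Q"
      then show "Q \<subseteq> R" using H3[of k "Suc k" m P Q R] g unfolding goodk_def by auto
    qed
  qed
  have "goodk Lev n (kseq (goodk Lev) n) \<and> kseq (goodk Lev) (Suc n) \<subseteq> kseq (goodk Lev) n" for n
    by (rule kseq_good) (use A B in auto)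
  then show ?thesis unfolding goodk_def by blast
qed


lemma PC_carrier_iff:
  "x \<in> carrier (profinite_completion K) \<longleftrightarrow>
     x \<in> (\<Pi>\<^sub>E N\<in>fin_index_normals K. rcosets\<^bsub>K\<^esub> N) \<and>
     (\<forall>N\<in>fin_index_normals K. \<forall>M\<in>fin_index_normals K. M \<subseteq> N \<longrightarrow> x M \<subseteq> x N)"
  by (simp add: profinite_completion_def carrier_Mod)

lemma PC_sub: "carrier (profinite_completion K) \<subseteq> (\<Pi>\<^sub>E N\<in>fin_index_normals K. rcosets\<^bsub>K\<^esub> N)"
proof
  fix x assume "x \<in> carrier (profinite_completion K)"
  then show "x \<in> (\<Pi>\<^sub>E N\<in>fin_index_normals K. rcosets\<^bsub>K\<^esub> N)" by (simp add: PC_carrier_iff)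
qed

lemma PC_mult: "mult (profinite_completion K) x y = (\<lambda>N\<in>fin_index_normals K. x N <#>\<^bsub>K\<^esub> y N)"
  by (simp add: profinite_completion_def)

lemma PC_coset: "x \<in> carrier (profinite_completion K) \<Longrightarrow> N \<in> fin_index_normals K \<Longrightarrow> x N \<in> rcosets\<^bsub>K\<^esub> N"
  by (auto simp: PC_carrier_iff PiE_iff)

lemma PC_compat: "x \<in> carrier (profinite_completion K) \<Longrightarrow> N \<in> fin_index_normals K \<Longrightarrow>
   M \<in> fin_index_normals K \<Longrightarrow> M \<subseteq> N \<Longrightarrow> x M \<subseteq> x N"
  by (auto simp: PC_carrier_iff)

lemma coset_rep:
  assumes "group K" "subgroup U K" "C \<in> rcosets\<^bsub>K\<^esub> U"
  obtains g where "g \<in> carrier K" "C = U #>\<^bsub>K\<^esub> g" "g \<in> C"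
proof -
  obtain g where g: "g \<in> carrier K" "C = U #>\<^bsub>K\<^esub> g" using assms(3) unfolding RCOSETS_def by blast
  moreover have "g \<in> C" using g group.rcos_self[OF assms(1) g(1) assms(2)] by simp
  ultimately show ?thesis using that by blast
qed

lemma coset_eq_rep:
  assumes "group K" "subgroup U K" "C \<in> rcosets\<^bsub>K\<^esub> U" "a \<in> C"
  shows "C = U #>\<^bsub>K\<^esub> a" "a \<in> carrier K"
proof -
  obtain g where g: "g \<in> carrier K" "C = U #>\<^bsub>K\<^esub> g" using coset_rep[OF assms(1-3)] by blast
  show "C = U #>\<^bsub>K\<^esub> a" using group.repr_independence[OF assms(1) _ g(1) assms(2)] assms(4) g(2) by simp
  show "a \<in> carrier K" using subgroup.elemrcos_carrier[OF assms(2,1) g(1)] assms(4) g(2) by simp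
qed

lemma same_coset_diff:
  assumes "group K" "subgroup U K" "C \<in> rcosets\<^bsub>K\<^esub> U" "a \<in> C" "a' \<in> C"
  shows "a' \<otimes>\<^bsub>K\<^esub> inv\<^bsub>K\<^esub> a \<in> U"
proof -
  have e: "C = U #>\<^bsub>K\<^esub> a" "C = U #>\<^bsub>K\<^esub> a'" "a \<in> carrier K" "a' \<in> carrier K"
    using coset_eq_rep[OF assms(1-3)] assms(4,5) by auto
  then show ?thesis using rcos_eq_iff[OF assms(1,2) e(4) e(3)] by simp
qed

lemma PC_mult_closed:
  assumes "group K" "x \<in> carrier (profinite_completion K)" "y \<in> carrier (profinite_completion K)"
  shows "mult (profinite_completion K) x y \<in> carrier (profinite_completion K)"
proof -
  have "(\<lambda>N\<in>fin_index_normals K. x N <#>\<^bsub>K\<^esub> y N) \<in> (\<Pi>\<^sub>E N\<in>fin_index_normals K. rcosets\<^bsub>K\<^esub> N)"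
  proof (rule restrict_PiE_iff[THEN iffD2], intro ballI)
    fix N assume N: "N \<in> fin_index_normals K"
    have nN: "N \<lhd> K" using N by (simp add: FN_iff)
    have sN: "subgroup N K" using nN normal_imp_subgroup by blast
    obtain g where g: "g \<in> carrier K" "x N = N #>\<^bsub>K\<^esub> g" using coset_rep[OF assms(1) sN PC_coset[OF assms(2) N]] by blast
    obtain h where h: "h \<in> carrier K" "y N = N #>\<^bsub>K\<^esub> h" using coset_rep[OF assms(1) sN PC_coset[OF assms(3) N]] by blast
    have "x N <#>\<^bsub>K\<^esub> y N = N #>\<^bsub>K\<^esub> (g \<otimes>\<^bsub>K\<^esub> h)" using normal.rcos_sum[OF nN g(1) h(1)] g h by simp
    moreover have "g \<otimes>\<^bsub>K\<^esub> h \<in> carrier K" by (rule monoid.m_closed[OF group.is_monoid[OF assms(1)] g(1) h(1)])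
    ultimately show "x N <#>\<^bsub>K\<^esub> y N \<in> rcosets\<^bsub>K\<^esub> N" using group.rcosetsI[OF assms(1) subgroup.subset[OF sN]] by simp
  qed
  moreover have "\<forall>N\<in>fin_index_normals K. \<forall>M\<in>fin_index_normals K. M \<subseteq> N \<longrightarrow>
       (\<lambda>N\<in>fin_index_normals K. x N <#>\<^bsub>K\<^esub> y N) M \<subseteq> (\<lambda>N\<in>fin_index_normals K. x N <#>\<^bsub>K\<^esub> y N) N"
    using PC_compat[OF assms(2)] PC_compat[OF assms(3)] mono_set_mult by (simp add: mono_set_mult)
  ultimately show ?thesis unfolding PC_carrier_iff PC_mult by blast
qed

definition Fm :: "('a,'m) monoid_scheme \<Rightarrow> ('b,'n) monoid_scheme \<Rightarrow> (nat \<Rightarrow> ('a \<times> 'b) set) \<Rightarrow> ('a set \<Rightarrow> 'a set) \<Rightarrow> ('b set \<Rightarrow> 'b set)" where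
  "Fm K1 K2 Rs x = (\<lambda>M\<in>fin_index_normals K2.
      M #>\<^bsub>K2\<^esub> snd (SOME p. p \<in> Rs (idx K2 M) \<and> fst p \<in> x (UU K1 (idx K2 M))))"

locale setting =
  fixes K1 :: "('a,'c) monoid_scheme" and K2 :: "('b,'d) monoid_scheme" and Rs :: "nat \<Rightarrow> ('a \<times> 'b) set"
  assumes G1: "group K1" and G2: "group K2"
    and fin1: "\<And>n. finite {N \<in> fin_index_normals K1. idx K1 N \<le> n}"
    and fin2: "\<And>n. finite {N \<in> fin_index_normals K2. idx K2 N \<le> n}"
    and dat: "\<And>n. datum K1 K2 (UU K1 n) (UU K2 n) (Rs n)"
    and dec: "\<And>n. Rs (Suc n) \<subseteq> Rs n"
begin

lemma UF1: "UU K1 n \<in> fin_index_normals K1" by (rule UU_FN[OF G1 fin1])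
lemma UF2: "UU K2 n \<in> fin_index_normals K2" by (rule UU_FN[OF G2 fin2])
lemma US1: "subgroup (UU K1 n) K1" using UF1 by (simp add: FN_iff normal_imp_subgroup)
lemma US2: "subgroup (UU K2 n) K2" using UF2 by (simp add: FN_iff normal_imp_subgroup)

lemma Rs_anti: "n \<le> m \<Longrightarrow> Rs m \<subseteq> Rs n"
proof (induction rule: dec_induct)
  case base then show ?case by simp
next
  case (step k) then show ?case using dec[of k] by blast
qed

lemma pick:
  assumes "x \<in> carrier (profinite_completion K1)"
  shows "\<exists>a b. (a,b) \<in> Rs j \<and> a \<in> x (UU K1 j)"
proof -
  obtain g where g: "g \<in> carrier K1" "g \<in> x (UU K1 j)"
    using coset_rep[OF G1 US1 PC_coset[OF assms UF1]] by blast
  obtain b where "(g,b) \<in> Rs j" using datum_fst[OF dat g(1)] by blast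
  then show ?thesis using g by blast
qed

lemma lvl:
  assumes "x \<in> carrier (profinite_completion K1)" "UU K2 l \<subseteq> M" "subgroup M K2"
    "(a,b) \<in> Rs l" "(a',b') \<in> Rs l" "a \<in> x (UU K1 l)" "a' \<in> x (UU K1 l)"
  shows "M #>\<^bsub>K2\<^esub> b = M #>\<^bsub>K2\<^esub> b'"
proof -
  have "a' \<otimes>\<^bsub>K1\<^esub> inv\<^bsub>K1\<^esub> a \<in> UU K1 l"
    by (rule same_coset_diff[OF G1 US1 PC_coset[OF assms(1) UF1] assms(6,7)])
  then have "b' \<otimes>\<^bsub>K2\<^esub> inv\<^bsub>K2\<^esub> b \<in> UU K2 l"
    by (rule datum_same_fst'[OF G1 G2 US1 dat assms(4,5)])
  then have "b' \<otimes>\<^bsub>K2\<^esub> inv\<^bsub>K2\<^esub> b \<in> M" using assms(2) by blast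
  moreover have "b \<in> carrier K2" "b' \<in> carrier K2" using datum_carr[OF dat] assms(4,5) by auto
  ultimately show ?thesis using rcos_eq_iff[OF G2 assms(3)] by metis
qed

lemma F_char:
  assumes x: "x \<in> carrier (profinite_completion K1)" and M: "M \<in> fin_index_normals K2"
    and j: "UU K2 j \<subseteq> M" and ab: "(a,b) \<in> Rs j" "a \<in> x (UU K1 j)"
  shows "Fm K1 K2 Rs x M = M #>\<^bsub>K2\<^esub> b"
proof -
  let ?k = "idx K2 M"
  have sM: "subgroup M K2" using M by (simp add: FN_iff normal_imp_subgroup)
  let ?p = "SOME p. p \<in> Rs ?k \<and> fst p \<in> x (UU K1 ?k)"
  have "\<exists>p. p \<in> Rs ?k \<and> fst p \<in> x (UU K1 ?k)" using pick[OF x, of ?k] by auto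
  then have p: "?p \<in> Rs ?k \<and> fst ?p \<in> x (UU K1 ?k)" by (rule someI_ex)
  have F: "Fm K1 K2 Rs x M = M #>\<^bsub>K2\<^esub> snd ?p" unfolding Fm_def using M by simp
  have kM: "UU K2 ?k \<subseteq> M" by (rule UU_sub[OF M order.refl])
  let ?m = "max j ?k"
  obtain a1 b1 where ab1: "(a1,b1) \<in> Rs ?m" "a1 \<in> x (UU K1 ?m)" using pick[OF x] by blast
  have "(a1,b1) \<in> Rs j" "(a1,b1) \<in> Rs ?k" using Rs_anti[of j ?m] Rs_anti[of ?k ?m] ab1(1) by auto
  moreover have "a1 \<in> x (UU K1 j)" "a1 \<in> x (UU K1 ?k)"
    using PC_compat[OF x UF1 UF1 UU_mono[of j ?m]] PC_compat[OF x UF1 UF1 UU_mono[of ?k ?m]] ab1(2) by auto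
  ultimately have e1: "M #>\<^bsub>K2\<^esub> b = M #>\<^bsub>K2\<^esub> b1" and e2: "M #>\<^bsub>K2\<^esub> snd ?p = M #>\<^bsub>K2\<^esub> b1"
    using lvl[OF x j sM ab(1) _ ab(2)] lvl[OF x kM sM, of "fst ?p" "snd ?p"] p by auto
  show ?thesis using F e1 e2 by simp
qed

lemma Fm_in:
  assumes x: "x \<in> carrier (profinite_completion K1)"
  shows "Fm K1 K2 Rs x \<in> carrier (profinite_completion K2)"
proof -
  have "Fm K1 K2 Rs x \<in> (\<Pi>\<^sub>E N\<in>fin_index_normals K2. rcosets\<^bsub>K2\<^esub> N)"
  proof -
    have "Fm K1 K2 Rs x M \<in> rcosets\<^bsub>K2\<^esub> M" if M: "M \<in> fin_index_normals K2" for M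
    proof -
      obtain a b where ab: "(a,b) \<in> Rs (idx K2 M)" "a \<in> x (UU K1 (idx K2 M))" using pick[OF x] by blast
      have "Fm K1 K2 Rs x M = M #>\<^bsub>K2\<^esub> b" by (rule F_char[OF x M UU_sub[OF M order.refl] ab])
      moreover have "b \<in> carrier K2" using datum_carr[OF dat ab(1)] by simp
      moreover have "M \<subseteq> carrier K2" using M by (simp add: FN_iff normal_imp_subgroup subgroup.subset)
      ultimately show ?thesis using group.rcosetsI[OF G2] by simp
    qed
    moreover have "Fm K1 K2 Rs x \<in> extensional (fin_index_normals K2)" unfolding Fm_def by simp
    ultimately show ?thesis by (simp add: PiE_iff)
  qed
  moreover have "\<forall>N\<in>fin_index_normals K2. \<forall>M\<in>fin_index_normals K2. M \<subseteq> N \<longrightarrow> Fm K1 K2 Rs x M \<subseteq> Fm K1 K2 Rs x N"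
  proof (intro ballI impI)
    fix N M assume N: "N \<in> fin_index_normals K2" and M: "M \<in> fin_index_normals K2" and MN: "M \<subseteq> N"
    obtain a b where ab: "(a,b) \<in> Rs (idx K2 M)" "a \<in> x (UU K1 (idx K2 M))" using pick[OF x] by blast
    have jM: "UU K2 (idx K2 M) \<subseteq> M" by (rule UU_sub[OF M order.refl])
    have "Fm K1 K2 Rs x M = M #>\<^bsub>K2\<^esub> b" by (rule F_char[OF x M jM ab])
    moreover have "Fm K1 K2 Rs x N = N #>\<^bsub>K2\<^esub> b" by (rule F_char[OF x N _ ab]) (use jM MN in blast)
    ultimately show "Fm K1 K2 Rs x M \<subseteq> Fm K1 K2 Rs x N" using MN unfolding r_coset_def by auto
  qed
  ultimately show ?thesis unfolding PC_carrier_iff by blast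
qed

lemma Fm_mult:
  assumes x: "x \<in> carrier (profinite_completion K1)" and y: "y \<in> carrier (profinite_completion K1)"
  shows "Fm K1 K2 Rs (mult (profinite_completion K1) x y) =
         mult (profinite_completion K2) (Fm K1 K2 Rs x) (Fm K1 K2 Rs y)"
proof (rule ext)
  fix M
  show "Fm K1 K2 Rs (mult (profinite_completion K1) x y) M =
         mult (profinite_completion K2) (Fm K1 K2 Rs x) (Fm K1 K2 Rs y) M"
  proof (cases "M \<in> fin_index_normals K2")
    case False
    then show ?thesis unfolding Fm_def PC_mult by simp
  next
    case M: True
    let ?j = "idx K2 M"
    have nM: "M \<lhd> K2" using M by (simp add: FN_iff)
    have jM: "UU K2 ?j \<subseteq> M" by (rule UU_sub[OF M order.refl])
    obtain a b where ab: "(a,b) \<in> Rs ?j" "a \<in> x (UU K1 ?j)" using pick[OF x] by blast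
    obtain a' b' where ab': "(a',b') \<in> Rs ?j" "a' \<in> y (UU K1 ?j)" using pick[OF y] by blast
    have xy: "mult (profinite_completion K1) x y \<in> carrier (profinite_completion K1)"
      by (rule PC_mult_closed[OF G1 x y])
    have m: "(a \<otimes>\<^bsub>K1\<^esub> a', b \<otimes>\<^bsub>K2\<^esub> b') \<in> Rs ?j" by (rule datum_mult[OF dat ab(1) ab'(1)])
    have "a \<otimes>\<^bsub>K1\<^esub> a' \<in> x (UU K1 ?j) <#>\<^bsub>K1\<^esub> y (UU K1 ?j)"
      using ab(2) ab'(2) unfolding set_mult_def by blast
    then have "a \<otimes>\<^bsub>K1\<^esub> a' \<in> mult (profinite_completion K1) x y (UU K1 ?j)"
      using UF1 unfolding PC_mult by simp
    then have 1: "Fm K1 K2 Rs (mult (profinite_completion K1) x y) M = M #>\<^bsub>K2\<^esub> (b \<otimes>\<^bsub>K2\<^esub> b')"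
      by (rule F_char[OF xy M jM m])
    have 2: "Fm K1 K2 Rs x M = M #>\<^bsub>K2\<^esub> b" by (rule F_char[OF x M jM ab])
    have 3: "Fm K1 K2 Rs y M = M #>\<^bsub>K2\<^esub> b'" by (rule F_char[OF y M jM ab'])
    have c: "b \<in> carrier K2" "b' \<in> carrier K2" using datum_carr[OF dat] ab(1) ab'(1) by auto
    show ?thesis using 1 2 3 M normal.rcos_sum[OF nM c] unfolding PC_mult by simp
  qed
qed

lemma Fm_cont:
  "continuous_map (profinite_topology K1) (profinite_topology K2) (Fm K1 K2 Rs)"
proof -
  let ?P1 = "product_topology (\<lambda>N. discrete_topology (carrier (K1 Mod N))) (fin_index_normals K1)"
  let ?P2 = "product_topology (\<lambda>N. discrete_topology (carrier (K2 Mod N))) (fin_index_normals K2)"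
  have top1: "topspace (subtopology ?P1 (carrier (profinite_completion K1))) = carrier (profinite_completion K1)"
    unfolding topspace_subtopology topspace_product_topology topspace_discrete_topology carrier_Mod
    by (rule Int_absorb1[OF PC_sub])
  have "continuous_map (subtopology ?P1 (carrier (profinite_completion K1))) ?P2 (Fm K1 K2 Rs)"
    unfolding continuous_map_componentwise
  proof (intro conjI ballI)
    show "Fm K1 K2 Rs ` topspace (subtopology ?P1 (carrier (profinite_completion K1))) \<subseteq> extensional (fin_index_normals K2)"
      unfolding Fm_def by auto
    fix M assume M: "M \<in> fin_index_normals K2"
    let ?k = "idx K2 M"
    define h where "h = (\<lambda>C. M #>\<^bsub>K2\<^esub> snd (SOME p. p \<in> Rs ?k \<and> fst p \<in> C))"
    have eq: "(\<lambda>x. Fm K1 K2 Rs x M) = h \<circ> (\<lambda>x. x (UU K1 ?k))"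
      unfolding Fm_def h_def using M by (simp add: o_def)
    have c1: "continuous_map (subtopology ?P1 (carrier (profinite_completion K1)))
                (discrete_topology (carrier (K1 Mod (UU K1 ?k)))) (\<lambda>x. x (UU K1 ?k))"
      by (rule continuous_map_from_subtopology[OF continuous_map_product_projection[OF UF1]])
    have c2: "continuous_map (discrete_topology (carrier (K1 Mod (UU K1 ?k))))
                (discrete_topology (carrier (K2 Mod M))) h"
      unfolding continuous_map_from_discrete_topology
    proof
      fix C assume C: "C \<in> carrier (K1 Mod UU K1 ?k)"
      obtain g where g: "g \<in> carrier K1" "g \<in> C" using coset_rep[OF G1 US1] C by (metis carrier_Mod)
      obtain b where "(g,b) \<in> Rs ?k" using datum_fst[OF dat g(1)] by blast
      then have "\<exists>p. p \<in> Rs ?k \<and> fst p \<in> C" using g by auto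
      then have "(SOME p. p \<in> Rs ?k \<and> fst p \<in> C) \<in> Rs ?k" by (metis (mono_tags, lifting) someI_ex)
      then have "snd (SOME p. p \<in> Rs ?k \<and> fst p \<in> C) \<in> carrier K2" using datum_carr[OF dat] by (metis prod.collapse)
      moreover have "M \<subseteq> carrier K2" using M by (simp add: FN_iff normal_imp_subgroup subgroup.subset)
      ultimately show "h C \<in> topspace (discrete_topology (carrier (K2 Mod M)))"
        unfolding h_def using group.rcosetsI[OF G2] by (simp add: carrier_Mod)
    qed
    show "continuous_map (subtopology ?P1 (carrier (profinite_completion K1)))
            (discrete_topology (carrier (K2 Mod M))) (\<lambda>x. Fm K1 K2 Rs x M)"
      unfolding eq by (rule continuous_map_compose[OF c1 c2])
  qed
  moreover have "Fm K1 K2 Rs \<in> topspace (subtopology ?P1 (carrier (profinite_completion K1))) \<rightarrow> carrier (profinite_completion K2)"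
    using Fm_in top1 by auto
  ultimately show ?thesis unfolding profinite_topology_def continuous_map_in_subtopology by blast
qed

lemma top_eq: "topspace (profinite_topology K1) = carrier (profinite_completion K1)"
  unfolding profinite_topology_def topspace_subtopology topspace_product_topology topspace_discrete_topology carrier_Mod
  by (rule Int_absorb1[OF PC_sub])

end

lemma setting_conv:
  assumes "setting K1 K2 Rs" shows "setting K2 K1 (\<lambda>n. (Rs n)\<inverse>)"
proof -
  interpret setting K1 K2 Rs by fact
  show ?thesis
    unfolding setting_def using G1 G2 fin1 fin2 datum_conv[OF dat] dec by (simp add: converse_mono)
qed


lemma Fm_inv:
  assumes S: "setting K1 K2 Rs" and x: "x \<in> carrier (profinite_completion K1)"
  shows "Fm K2 K1 (\<lambda>n. (Rs n)\<inverse>) (Fm K1 K2 Rs x) = x"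
proof -
  interpret A: setting K1 K2 Rs by fact
  interpret B: setting K2 K1 "\<lambda>n. (Rs n)\<inverse>" by (rule setting_conv[OF S])
  let ?y = "Fm K1 K2 Rs x"
  have y: "?y \<in> carrier (profinite_completion K2)" by (rule A.Fm_in[OF x])
  show ?thesis
  proof (rule ext)
    fix N
    show "Fm K2 K1 (\<lambda>n. (Rs n)\<inverse>) ?y N = x N"
    proof (cases "N \<in> fin_index_normals K1")
      case False
      have "x \<in> (\<Pi>\<^sub>E N\<in>fin_index_normals K1. rcosets\<^bsub>K1\<^esub> N)" using x PC_sub by blast
      then have "x \<in> extensional (fin_index_normals K1)" by (simp add: PiE_iff)
      then have "x N = undefined" using False by (simp add: extensional_def)
      then show ?thesis using False unfolding Fm_def by simp
    next
      case N: True
      let ?j = "idx K1 N"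
      have jN: "UU K1 ?j \<subseteq> N" by (rule UU_sub[OF N order.refl])
      obtain a b where ab: "(a,b) \<in> Rs ?j" "a \<in> x (UU K1 ?j)" using A.pick[OF x] by blast
      have "?y (UU K2 ?j) = UU K2 ?j #>\<^bsub>K2\<^esub> b"
        by (rule A.F_char[OF x A.UF2 order.refl ab])
      moreover have "b \<in> carrier K2" using datum_carr[OF A.dat ab(1)] by simp
      ultimately have bmem: "b \<in> ?y (UU K2 ?j)" using group.rcos_self[OF A.G2 _ A.US2] by simp
      have ba: "(b,a) \<in> (\<lambda>n. (Rs n)\<inverse>) ?j" using ab(1) by simp
      have 1: "Fm K2 K1 (\<lambda>n. (Rs n)\<inverse>) ?y N = N #>\<^bsub>K1\<^esub> a"
        by (rule B.F_char[OF y N jN ba bmem])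
      have "a \<in> x N" using PC_compat[OF x N A.UF1 jN] ab(2) by blast
      then have "x N = N #>\<^bsub>K1\<^esub> a"
        using coset_eq_rep(1)[OF A.G1 _ PC_coset[OF x N]] N by (simp add: FN_iff normal_imp_subgroup)
      then show ?thesis using 1 by simp
    qed
  qed
qed

theorem completion_iso:
  assumes S: "setting K1 K2 Rs"
  shows "profinite_completions_iso K1 K2"
proof -
  interpret A: setting K1 K2 Rs by fact
  have S': "setting K2 K1 (\<lambda>n. (Rs n)\<inverse>)" by (rule setting_conv[OF S])
  interpret B: setting K2 K1 "\<lambda>n. (Rs n)\<inverse>" by (rule S')
  let ?f = "Fm K1 K2 Rs" and ?g = "Fm K2 K1 (\<lambda>n. (Rs n)\<inverse>)"
  have gf: "\<forall>x\<in>carrier (profinite_completion K1). ?g (?f x) = x" using Fm_inv[OF S] by blast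
  have fg0: "\<forall>y\<in>carrier (profinite_completion K2). Fm K1 K2 (\<lambda>n. ((Rs n)\<inverse>)\<inverse>) (?g y) = y"
    using Fm_inv[OF S'] by blast
  have fg: "\<forall>y\<in>carrier (profinite_completion K2). ?f (?g y) = y" using fg0 by simp
  have fi: "?f ` carrier (profinite_completion K1) \<subseteq> carrier (profinite_completion K2)" using A.Fm_in by blast
  have gi: "?g ` carrier (profinite_completion K2) \<subseteq> carrier (profinite_completion K1)" using B.Fm_in by blast
  have "?f \<in> iso (profinite_completion K1) (profinite_completion K2)"
    unfolding iso_def hom_def
  proof (intro CollectI conjI)
    show "?f \<in> carrier (profinite_completion K1) \<rightarrow> carrier (profinite_completion K2)" using fi by blast
    show "\<forall>x\<in>carrier (profinite_completion K1). \<forall>y\<in>carrier (profinite_completion K1).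
       ?f (x \<otimes>\<^bsub>profinite_completion K1\<^esub> y) = ?f x \<otimes>\<^bsub>profinite_completion K2\<^esub> ?f y"
      using A.Fm_mult by blast
    show "bij_betw ?f (carrier (profinite_completion K1)) (carrier (profinite_completion K2))"
      by (rule bij_betw_byWitness[OF gf fg fi gi])
  qed
  moreover have "homeomorphic_map (profinite_topology K1) (profinite_topology K2) ?f"
    unfolding homeomorphic_map_maps homeomorphic_maps_def
    using A.Fm_cont B.Fm_cont gf fg A.top_eq B.top_eq by metis
  ultimately show ?thesis unfolding profinite_completions_iso_def by blast
qed


lemma preimage_subgroup:
  assumes "group Gm" "group G" "h \<in> hom Gm G" "subgroup S G"
  shows "subgroup {x \<in> carrier Gm. h x \<in> S} Gm"
proof -
  interpret gh: group_hom Gm G h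
    by (rule group_hom.intro[OF assms(1) assms(2) group_hom_axioms.intro[OF assms(3)]])
  show ?thesis
  proof (rule gh.G.subgroupI)
    have "h \<one>\<^bsub>Gm\<^esub> \<in> S" using subgroup.one_closed[OF assms(4)] by simp
    then show "{x \<in> carrier Gm. h x \<in> S} \<noteq> {}" by blast
    show "inv\<^bsub>Gm\<^esub> a \<in> {x \<in> carrier Gm. h x \<in> S}" if a: "a \<in> {x \<in> carrier Gm. h x \<in> S}" for a
      using a subgroup.m_inv_closed[OF assms(4)] by simp
    show "a \<otimes>\<^bsub>Gm\<^esub> b \<in> {x \<in> carrier Gm. h x \<in> S}"
      if a: "a \<in> {x \<in> carrier Gm. h x \<in> S}" and b: "b \<in> {x \<in> carrier Gm. h x \<in> S}" for a b
      using a b subgroup.m_closed[OF assms(4)] by simp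
  qed auto
qed

lemma preimage_fin_index:
  assumes "group Gm" "group G" "h \<in> hom Gm G" "subgroup S G" "finite (h ` carrier Gm)"
  shows "finite (rcosets\<^bsub>Gm\<^esub> {x \<in> carrier Gm. h x \<in> S})"
proof -
  interpret gh: group_hom Gm G h
    by (rule group_hom.intro[OF assms(1) assms(2) group_hom_axioms.intro[OF assms(3)]])
  let ?P = "{x \<in> carrier Gm. h x \<in> S}"
  have sP: "subgroup ?P Gm" by (rule preimage_subgroup[OF assms(1-4)])
  have "\<forall>p\<in>carrier Gm. \<forall>q\<in>carrier Gm. h p = h q \<longrightarrow> ?P #>\<^bsub>Gm\<^esub> p = ?P #>\<^bsub>Gm\<^esub> q"
  proof (intro ballI impI)
    fix p q assume p: "p \<in> carrier Gm" and q: "q \<in> carrier Gm" and e: "h p = h q"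
    have "h (p \<otimes>\<^bsub>Gm\<^esub> inv\<^bsub>Gm\<^esub> q) = \<one>\<^bsub>G\<^esub>" using p q e by simp
    then have "p \<otimes>\<^bsub>Gm\<^esub> inv\<^bsub>Gm\<^esub> q \<in> ?P" using p q subgroup.one_closed[OF assms(4)] by simp
    then show "?P #>\<^bsub>Gm\<^esub> p = ?P #>\<^bsub>Gm\<^esub> q" using rcos_eq_iff[OF assms(1) sP p q] by simp
  qed
  from card_factor[OF this assms(5)] show ?thesis by (simp add: rcosets_img)
qed

lemma rcosets_sub_img:
  "rcosets\<^bsub>Gm\<lparr>carrier := K\<rparr>\<^esub> U = (\<lambda>k. U #>\<^bsub>Gm\<^esub> k) ` K"
  by (simp add: rcosets_img)

lemma tower:
  assumes "group Gm" "subgroup K Gm" "subgroup U Gm" "U \<subseteq> K"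
    "finite (rcosets\<^bsub>Gm\<lparr>carrier := K\<rparr>\<^esub> U)" "finite (rcosets\<^bsub>Gm\<^esub> K)"
  shows "finite (rcosets\<^bsub>Gm\<^esub> U) \<and>
    card (rcosets\<^bsub>Gm\<^esub> U) \<le> card (rcosets\<^bsub>Gm\<lparr>carrier := K\<rparr>\<^esub> U) * card (rcosets\<^bsub>Gm\<^esub> K)"
proof -
  interpret Gm: group Gm by fact
  define rep where "rep = (\<lambda>E::'a set. SOME t. t \<in> E)"
  let ?F = "\<lambda>DE. fst DE #>\<^bsub>Gm\<^esub> rep (snd DE)"
  have sub: "rcosets\<^bsub>Gm\<^esub> U \<subseteq> ?F ` ((rcosets\<^bsub>Gm\<lparr>carrier := K\<rparr>\<^esub> U) \<times> (rcosets\<^bsub>Gm\<^esub> K))"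
  proof
    fix XX assume "XX \<in> rcosets\<^bsub>Gm\<^esub> U"
    then obtain g where g: "g \<in> carrier Gm" "XX = U #>\<^bsub>Gm\<^esub> g" unfolding RCOSETS_def by blast
    let ?E = "K #>\<^bsub>Gm\<^esub> g"
    have "g \<in> ?E" by (rule Gm.rcos_self[OF g(1) assms(2)])
    then have t: "rep ?E \<in> ?E" unfolding rep_def by (rule someI)
    then obtain k where k: "k \<in> K" "rep ?E = k \<otimes>\<^bsub>Gm\<^esub> g" unfolding r_coset_def by blast
    have kc: "k \<in> carrier Gm" using k(1) subgroup.mem_carrier[OF assms(2)] by blast
    have ik: "inv\<^bsub>Gm\<^esub> k \<in> K" by (rule subgroup.m_inv_closed[OF assms(2) k(1)])
    have "U #>\<^bsub>Gm\<^esub> g = U #>\<^bsub>Gm\<^esub> (inv\<^bsub>Gm\<^esub> k \<otimes>\<^bsub>Gm\<^esub> rep ?E)"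
      using k(2) kc g(1) by (simp add: Gm.m_assoc[symmetric])
    also have "\<dots> = (U #>\<^bsub>Gm\<^esub> inv\<^bsub>Gm\<^esub> k) #>\<^bsub>Gm\<^esub> rep ?E"
      using Gm.coset_mult_assoc[OF subgroup.subset[OF assms(3)]] kc k(2) g(1) by simp
    finally have "XX = ?F (U #>\<^bsub>Gm\<^esub> inv\<^bsub>Gm\<^esub> k, ?E)" using g(2) by simp
    moreover have "U #>\<^bsub>Gm\<^esub> inv\<^bsub>Gm\<^esub> k \<in> rcosets\<^bsub>Gm\<lparr>carrier := K\<rparr>\<^esub> U"
      unfolding rcosets_sub_img using ik by blast
    moreover have "?E \<in> rcosets\<^bsub>Gm\<^esub> K" by (rule Gm.rcosetsI[OF subgroup.subset[OF assms(2)] g(1)])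
    ultimately show "XX \<in> ?F ` ((rcosets\<^bsub>Gm\<lparr>carrier := K\<rparr>\<^esub> U) \<times> (rcosets\<^bsub>Gm\<^esub> K))" by blast
  qed
  have fin: "finite ((rcosets\<^bsub>Gm\<lparr>carrier := K\<rparr>\<^esub> U) \<times> (rcosets\<^bsub>Gm\<^esub> K))" using assms(5,6) by simp
  have "card (rcosets\<^bsub>Gm\<^esub> U) \<le> card (?F ` ((rcosets\<^bsub>Gm\<lparr>carrier := K\<rparr>\<^esub> U) \<times> (rcosets\<^bsub>Gm\<^esub> K)))"
    by (rule card_mono[OF finite_imageI[OF fin] sub])
  also have "\<dots> \<le> card ((rcosets\<^bsub>Gm\<lparr>carrier := K\<rparr>\<^esub> U) \<times> (rcosets\<^bsub>Gm\<^esub> K))" by (rule card_image_le[OF fin])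
  also have "\<dots> = card (rcosets\<^bsub>Gm\<lparr>carrier := K\<rparr>\<^esub> U) * card (rcosets\<^bsub>Gm\<^esub> K)" by (rule card_cartesian_product)
  finally show ?thesis using finite_subset[OF sub finite_imageI[OF fin]] by simp
qed

lemma coset_in_rcosets:
  assumes "group Gm" "subgroup V Gm" "D \<in> rcosets\<^bsub>Gm\<^esub> V" "x \<in> carrier Gm"
  shows "D #>\<^bsub>Gm\<^esub> x \<in> rcosets\<^bsub>Gm\<^esub> V"
proof -
  interpret Gm: group Gm by fact
  obtain y where y: "y \<in> carrier Gm" "D = V #>\<^bsub>Gm\<^esub> y" using assms(3) unfolding RCOSETS_def by blast
  have "D #>\<^bsub>Gm\<^esub> x = V #>\<^bsub>Gm\<^esub> (y \<otimes>\<^bsub>Gm\<^esub> x)"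
    using y Gm.coset_mult_assoc[OF subgroup.subset[OF assms(2)] y(1) assms(4)] by simp
  then show ?thesis using Gm.rcosetsI[OF subgroup.subset[OF assms(2)]] y(1) assms(4) by simp
qed

lemma core_exists:
  assumes "group Gm" "subgroup V Gm" "finite (rcosets\<^bsub>Gm\<^esub> V)"
  shows "\<exists>C. C \<lhd> Gm \<and> finite (rcosets\<^bsub>Gm\<^esub> C) \<and> C \<subseteq> V"
proof -
  interpret Gm: group Gm by fact
  let ?R = "rcosets\<^bsub>Gm\<^esub> V"
  define C where "C = {g \<in> carrier Gm. \<forall>D\<in>?R. D #>\<^bsub>Gm\<^esub> g = D}"
  have Dc: "D \<subseteq> carrier Gm" if "D \<in> ?R" for D by (rule subgroup.rcosets_carrier[OF assms(2,1) that])
  have sC: "subgroup C Gm"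
  proof (rule Gm.subgroupI)
    show "C \<subseteq> carrier Gm" unfolding C_def by blast
    have "\<one>\<^bsub>Gm\<^esub> \<in> C" unfolding C_def using Dc by simp
    then show "C \<noteq> {}" by blast
    show "inv\<^bsub>Gm\<^esub> a \<in> C" if a: "a \<in> C" for a
    proof -
      have ac: "a \<in> carrier Gm" using a unfolding C_def by blast
      have "D #>\<^bsub>Gm\<^esub> inv\<^bsub>Gm\<^esub> a = D" if D: "D \<in> ?R" for D
      proof -
        have "D #>\<^bsub>Gm\<^esub> inv\<^bsub>Gm\<^esub> a = (D #>\<^bsub>Gm\<^esub> a) #>\<^bsub>Gm\<^esub> inv\<^bsub>Gm\<^esub> a"
          using a D unfolding C_def by simp
        also have "\<dots> = D" using Gm.coset_mult_assoc[OF Dc[OF D] ac] ac Dc[OF D] by simp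
        finally show ?thesis .
      qed
      then show ?thesis unfolding C_def using ac by simp
    qed
    show "a \<otimes>\<^bsub>Gm\<^esub> b \<in> C" if a: "a \<in> C" and b: "b \<in> C" for a b
    proof -
      have ac: "a \<in> carrier Gm" "b \<in> carrier Gm" using a b unfolding C_def by auto
      have "D #>\<^bsub>Gm\<^esub> (a \<otimes>\<^bsub>Gm\<^esub> b) = D" if D: "D \<in> ?R" for D
      proof -
        have "D #>\<^bsub>Gm\<^esub> (a \<otimes>\<^bsub>Gm\<^esub> b) = (D #>\<^bsub>Gm\<^esub> a) #>\<^bsub>Gm\<^esub> b"
          using Gm.coset_mult_assoc[OF Dc[OF D] ac] by simp
        also have "\<dots> = D" using a b D unfolding C_def by simp
        finally show ?thesis .
      qed
      then show ?thesis unfolding C_def using ac by simp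
    qed
  qed
  have nC: "C \<lhd> Gm"
  proof -
    have "\<forall>x\<in>carrier Gm. \<forall>h\<in>C. x \<otimes>\<^bsub>Gm\<^esub> h \<otimes>\<^bsub>Gm\<^esub> inv\<^bsub>Gm\<^esub> x \<in> C"
    proof (intro ballI)
      fix x h assume x: "x \<in> carrier Gm" and h: "h \<in> C"
      have hc: "h \<in> carrier Gm" using h unfolding C_def by blast
      have "D #>\<^bsub>Gm\<^esub> (x \<otimes>\<^bsub>Gm\<^esub> h \<otimes>\<^bsub>Gm\<^esub> inv\<^bsub>Gm\<^esub> x) = D" if D: "D \<in> ?R" for D
      proof -
        have Dx: "D #>\<^bsub>Gm\<^esub> x \<in> ?R" by (rule coset_in_rcosets[OF assms(1,2) D x])
        have "D #>\<^bsub>Gm\<^esub> (x \<otimes>\<^bsub>Gm\<^esub> h \<otimes>\<^bsub>Gm\<^esub> inv\<^bsub>Gm\<^esub> x) = ((D #>\<^bsub>Gm\<^esub> x) #>\<^bsub>Gm\<^esub> h) #>\<^bsub>Gm\<^esub> inv\<^bsub>Gm\<^esub> x"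
          using Gm.coset_mult_assoc Dc[OF D] x hc by (simp add: Gm.r_coset_subset_G)
        also have "\<dots> = (D #>\<^bsub>Gm\<^esub> x) #>\<^bsub>Gm\<^esub> inv\<^bsub>Gm\<^esub> x" using h Dx unfolding C_def by simp
        also have "\<dots> = D" using Gm.coset_mult_assoc[OF Dc[OF D] x] x Dc[OF D] by simp
        finally show ?thesis .
      qed
      then show "x \<otimes>\<^bsub>Gm\<^esub> h \<otimes>\<^bsub>Gm\<^esub> inv\<^bsub>Gm\<^esub> x \<in> C" unfolding C_def using x hc by simp
    qed
    then show ?thesis using sC Gm.normal_inv_iff by blast
  qed
  have CV: "C \<subseteq> V"
  proof
    fix g assume g: "g \<in> C"
    have gc: "g \<in> carrier Gm" using g unfolding C_def by blast
    have "V \<in> ?R" using Gm.rcosetsI[OF subgroup.subset[OF assms(2)] Gm.one_closed]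
        Gm.coset_mult_one[OF subgroup.subset[OF assms(2)]] by simp
    then have "V #>\<^bsub>Gm\<^esub> g = V" using g unfolding C_def by blast
    then show "g \<in> V" by (rule Gm.coset_join1[OF _ gc assms(2)])
  qed
  let ?g = "\<lambda>g. \<lambda>D\<in>?R. D #>\<^bsub>Gm\<^esub> g"
  have "?g ` carrier Gm \<subseteq> (\<Pi>\<^sub>E D\<in>?R. ?R)"
  proof
    fix y assume "y \<in> ?g ` carrier Gm"
    then obtain g where g: "g \<in> carrier Gm" "y = ?g g" by blast
    have "D #>\<^bsub>Gm\<^esub> g \<in> ?R" if "D \<in> ?R" for D by (rule coset_in_rcosets[OF assms(1,2) that g(1)])
    then show "y \<in> (\<Pi>\<^sub>E D\<in>?R. ?R)" using g by (simp add: PiE_iff)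
  qed
  then have fin: "finite (?g ` carrier Gm)" using finite_PiE[OF assms(3), of "\<lambda>_. ?R"] assms(3) finite_subset by blast
  have "\<forall>p\<in>carrier Gm. \<forall>q\<in>carrier Gm. ?g p = ?g q \<longrightarrow> C #>\<^bsub>Gm\<^esub> p = C #>\<^bsub>Gm\<^esub> q"
  proof (intro ballI impI)
    fix p q assume p: "p \<in> carrier Gm" and q: "q \<in> carrier Gm" and e: "?g p = ?g q"
    have eD: "D #>\<^bsub>Gm\<^esub> p = D #>\<^bsub>Gm\<^esub> q" if "D \<in> ?R" for D using e that by (metis restrict_apply')
    have "D #>\<^bsub>Gm\<^esub> (p \<otimes>\<^bsub>Gm\<^esub> inv\<^bsub>Gm\<^esub> q) = D" if D: "D \<in> ?R" for D
    proof -
      have "D #>\<^bsub>Gm\<^esub> (p \<otimes>\<^bsub>Gm\<^esub> inv\<^bsub>Gm\<^esub> q) = (D #>\<^bsub>Gm\<^esub> p) #>\<^bsub>Gm\<^esub> inv\<^bsub>Gm\<^esub> q"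
        using Gm.coset_mult_assoc[OF Dc[OF D] p] q by simp
      also have "\<dots> = (D #>\<^bsub>Gm\<^esub> q) #>\<^bsub>Gm\<^esub> inv\<^bsub>Gm\<^esub> q" using eD[OF D] by simp
      also have "\<dots> = D" using Gm.coset_mult_assoc[OF Dc[OF D] q] q Dc[OF D] by simp
      finally show ?thesis .
    qed
    then have "p \<otimes>\<^bsub>Gm\<^esub> inv\<^bsub>Gm\<^esub> q \<in> C" unfolding C_def using p q by simp
    then show "C #>\<^bsub>Gm\<^esub> p = C #>\<^bsub>Gm\<^esub> q" using rcos_eq_iff[OF assms(1) sC p q] by simp
  qed
  from card_factor[OF this fin] have "finite (rcosets\<^bsub>Gm\<^esub> C)" by (simp add: rcosets_img)
  then show ?thesis using nC CV by blast
qed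


definition goodrho :: "('a,'m) monoid_scheme \<Rightarrow> ('a \<Rightarrow> nat \<Rightarrow> nat) \<Rightarrow> bool" where
  "goodrho Gm \<rho> \<longleftrightarrow> \<rho> \<one>\<^bsub>Gm\<^esub> = id \<and> (\<forall>g\<in>carrier Gm. \<forall>h\<in>carrier Gm. \<rho> (g \<otimes>\<^bsub>Gm\<^esub> h) = \<rho> h \<circ> \<rho> g)"

lemma goodrho_agree:
  assumes "group Gm" "S \<subseteq> carrier Gm" "goodrho Gm \<rho>1" "goodrho Gm \<rho>2" "\<forall>s\<in>S. \<rho>1 s = \<rho>2 s"
    "g \<in> generate Gm S"
  shows "\<rho>1 g = \<rho>2 g"
  using assms(6)
proof (induction rule: generate.induct)
  case one
  then show ?case using assms(3,4) unfolding goodrho_def by simp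
next
  case (incl h)
  then show ?case using assms(5) by blast
next
  case (inv h)
  interpret Gm: group Gm by fact
  have hc: "h \<in> carrier Gm" using inv assms(2) by blast
  have ic: "inv\<^bsub>Gm\<^esub> h \<in> carrier Gm" using hc by simp
  have f: "\<rho>1 h = \<rho>2 h" using inv assms(5) by blast
  have a1: "\<rho>1 (inv\<^bsub>Gm\<^esub> h) \<circ> \<rho>1 h = id"
  proof -
    have "\<rho>1 (h \<otimes>\<^bsub>Gm\<^esub> inv\<^bsub>Gm\<^esub> h) = \<rho>1 (inv\<^bsub>Gm\<^esub> h) \<circ> \<rho>1 h" using assms(3) hc ic unfolding goodrho_def by blast
    moreover have "\<rho>1 (h \<otimes>\<^bsub>Gm\<^esub> inv\<^bsub>Gm\<^esub> h) = id" using assms(3) hc unfolding goodrho_def by simp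
    ultimately show ?thesis by simp
  qed
  have a2: "\<rho>2 h \<circ> \<rho>2 (inv\<^bsub>Gm\<^esub> h) = id"
  proof -
    have "\<rho>2 (inv\<^bsub>Gm\<^esub> h \<otimes>\<^bsub>Gm\<^esub> h) = \<rho>2 h \<circ> \<rho>2 (inv\<^bsub>Gm\<^esub> h)" using assms(4) hc ic unfolding goodrho_def by blast
    moreover have "\<rho>2 (inv\<^bsub>Gm\<^esub> h \<otimes>\<^bsub>Gm\<^esub> h) = id" using assms(4) hc unfolding goodrho_def by simp
    ultimately show ?thesis by simp
  qed
  have "\<rho>1 (inv\<^bsub>Gm\<^esub> h) = \<rho>1 (inv\<^bsub>Gm\<^esub> h) \<circ> (\<rho>2 h \<circ> \<rho>2 (inv\<^bsub>Gm\<^esub> h))" using a2 by simp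
  also have "\<dots> = (\<rho>1 (inv\<^bsub>Gm\<^esub> h) \<circ> \<rho>1 h) \<circ> \<rho>2 (inv\<^bsub>Gm\<^esub> h)" using f by (simp add: o_assoc)
  also have "\<dots> = \<rho>2 (inv\<^bsub>Gm\<^esub> h)" using a1 by simp
  finally show ?case .
next
  case (eng h1 h2)
  interpret Gm: group Gm by fact
  have c: "h1 \<in> carrier Gm" "h2 \<in> carrier Gm"
    using eng.hyps Gm.generate_incl[OF assms(2)] by blast+
  have "\<rho>1 (h1 \<otimes>\<^bsub>Gm\<^esub> h2) = \<rho>1 h2 \<circ> \<rho>1 h1" using assms(3) c unfolding goodrho_def by blast
  moreover have "\<rho>2 (h1 \<otimes>\<^bsub>Gm\<^esub> h2) = \<rho>2 h2 \<circ> \<rho>2 h1" using assms(4) c unfolding goodrho_def by blast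
  ultimately show ?case using eng.IH by simp
qed

definition FF :: "nat \<Rightarrow> (nat \<Rightarrow> nat) set" where
  "FF m = {f. (\<forall>i. m \<le> i \<longrightarrow> f i = i) \<and> (\<forall>i<m. f i < m)}"

lemma FF_finite: "finite (FF m)"
proof -
  let ?ext = "\<lambda>f::nat\<Rightarrow>nat. \<lambda>i. if i < m then f i else i"
  have "FF m \<subseteq> ?ext ` (\<Pi>\<^sub>E i\<in>{..<m}. {..<m})"
  proof
    fix f assume f: "f \<in> FF m"
    have "restrict f {..<m} \<in> (\<Pi>\<^sub>E i\<in>{..<m}. {..<m})" using f unfolding FF_def by auto
    moreover have "f = ?ext (restrict f {..<m})" using f unfolding FF_def by (auto simp: fun_eq_iff)
    ultimately show "f \<in> ?ext ` (\<Pi>\<^sub>E i\<in>{..<m}. {..<m})" by blast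
  qed
  moreover have "finite (\<Pi>\<^sub>E i\<in>{..<m}. {..<m})" by (simp add: finite_PiE)
  ultimately show ?thesis using finite_subset by blast
qed

definition Phi :: "('a,'m) monoid_scheme \<Rightarrow> 'a set \<Rightarrow> ('a \<Rightarrow> nat \<Rightarrow> nat) \<times> nat \<Rightarrow> 'a set" where
  "Phi Gm S si = {g \<in> carrier Gm. \<forall>\<rho>. goodrho Gm \<rho> \<and> (\<forall>s\<in>S. \<rho> s = fst si s) \<longrightarrow> \<rho> g (snd si) = snd si}"

lemma subgroup_code:
  assumes "group Gm" "finite S" "S \<subseteq> carrier Gm" "generate Gm S = carrier Gm"
    "subgroup U Gm" "finite (rcosets\<^bsub>Gm\<^esub> U)" "card (rcosets\<^bsub>Gm\<^esub> U) \<le> m"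
  shows "U \<in> Phi Gm S ` ((\<Pi>\<^sub>E s\<in>S. FF m) \<times> {..<m})"
proof -
  interpret Gm: group Gm by fact
  let ?R = "rcosets\<^bsub>Gm\<^esub> U"
  obtain e c where ec: "e ` ?R = {i::nat. i < c}" "inj_on e ?R" using finite_imp_inj_to_nat_seg[OF assms(6)] by blast
  have cc: "c = card ?R" using card_image[OF ec(2)] ec(1) by simp
  then have cm: "c \<le> m" using assms(7) by simp
  define e' where "e' = inv_into ?R e"
  have e'1: "e' i \<in> ?R \<and> e (e' i) = i" if "i < c" for i
  proof -
    have "i \<in> e ` ?R" using ec(1) that by simp
    then show ?thesis unfolding e'_def by (simp add: inv_into_into f_inv_into_f)
  qed
  have e'2: "e' (e D) = D" if "D \<in> ?R" for D unfolding e'_def by (rule inv_into_f_f[OF ec(2) that])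
  have eR: "e D < c" if "D \<in> ?R" for D using ec(1) that by blast
  have Rc: "D \<subseteq> carrier Gm" if "D \<in> ?R" for D by (rule subgroup.rcosets_carrier[OF assms(5,1) that])
  define \<rho> where "\<rho> = (\<lambda>g i. if i < c then e (e' i #>\<^bsub>Gm\<^esub> g) else i)"
  have good: "goodrho Gm \<rho>"
    unfolding goodrho_def
  proof (intro conjI ballI)
    show "\<rho> \<one>\<^bsub>Gm\<^esub> = id"
    proof (rule ext)
      fix i show "\<rho> \<one>\<^bsub>Gm\<^esub> i = id i"
        using e'1[of i] Rc[of "e' i"] unfolding \<rho>_def by auto
    qed
    fix g h assume g: "g \<in> carrier Gm" and h: "h \<in> carrier Gm"
    show "\<rho> (g \<otimes>\<^bsub>Gm\<^esub> h) = \<rho> h \<circ> \<rho> g"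
    proof (rule ext)
      fix i
      show "\<rho> (g \<otimes>\<^bsub>Gm\<^esub> h) i = (\<rho> h \<circ> \<rho> g) i"
      proof (cases "i < c")
        case True
        have D: "e' i \<in> ?R" using e'1[OF True] by blast
        have Dg: "e' i #>\<^bsub>Gm\<^esub> g \<in> ?R" by (rule coset_in_rcosets[OF assms(1,5) D g])
        have "\<rho> g i = e (e' i #>\<^bsub>Gm\<^esub> g)" using True unfolding \<rho>_def by simp
        moreover have "e (e' i #>\<^bsub>Gm\<^esub> g) < c" by (rule eR[OF Dg])
        ultimately have "(\<rho> h \<circ> \<rho> g) i = e ((e' i #>\<^bsub>Gm\<^esub> g) #>\<^bsub>Gm\<^esub> h)"
          unfolding \<rho>_def using e'2[OF Dg] by simp
        also have "\<dots> = e (e' i #>\<^bsub>Gm\<^esub> (g \<otimes>\<^bsub>Gm\<^esub> h))" using Gm.coset_mult_assoc[OF Rc[OF D] g h] by simp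
        also have "\<dots> = \<rho> (g \<otimes>\<^bsub>Gm\<^esub> h) i" using True unfolding \<rho>_def by simp
        finally show ?thesis by simp
      next
        case False
        then show ?thesis unfolding \<rho>_def by simp
      qed
    qed
  qed
  have inFF: "\<rho> g \<in> FF m" if g: "g \<in> carrier Gm" for g
  proof -
    have "\<rho> g i = i" if "m \<le> i" for i using that cm unfolding \<rho>_def by simp
    moreover have "\<rho> g i < m" if "i < m" for i
    proof (cases "i < c")
      case True
      have "e' i #>\<^bsub>Gm\<^esub> g \<in> ?R" using coset_in_rcosets[OF assms(1,5) _ g] e'1[OF True] by blast
      then show ?thesis using eR True cm unfolding \<rho>_def by fastforce
    next
      case False then show ?thesis using that unfolding \<rho>_def by simp
    qed
    ultimately show ?thesis unfolding FF_def by blast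
  qed
  have UR: "U \<in> ?R"
    using Gm.rcosetsI[OF subgroup.subset[OF assms(5)] Gm.one_closed] Gm.coset_mult_one[OF subgroup.subset[OF assms(5)]]
    by simp
  let ?i0 = "e U"
  let ?\<sigma> = "restrict \<rho> S"
  have mem: "(?\<sigma>, ?i0) \<in> (\<Pi>\<^sub>E s\<in>S. FF m) \<times> {..<m}"
    using inFF assms(3) eR[OF UR] cm by auto
  have "Phi Gm S (?\<sigma>, ?i0) = U"
  proof
    show "Phi Gm S (?\<sigma>, ?i0) \<subseteq> U"
    proof
      fix g assume g: "g \<in> Phi Gm S (?\<sigma>, ?i0)"
      then have gc: "g \<in> carrier Gm" unfolding Phi_def by blast
      have "\<rho> g ?i0 = ?i0" using g good unfolding Phi_def by auto
      then have "e (U #>\<^bsub>Gm\<^esub> g) = e U" using eR[OF UR] e'2[OF UR] unfolding \<rho>_def by simp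
      moreover have "U #>\<^bsub>Gm\<^esub> g \<in> ?R" by (rule coset_in_rcosets[OF assms(1,5) UR gc])
      ultimately have "U #>\<^bsub>Gm\<^esub> g = U" using ec(2) UR by (meson inj_onD)
      then show "g \<in> U" by (rule Gm.coset_join1[OF _ gc assms(5)])
    qed
    show "U \<subseteq> Phi Gm S (?\<sigma>, ?i0)"
    proof
      fix g assume gU: "g \<in> U"
      have gc: "g \<in> carrier Gm" using gU subgroup.mem_carrier[OF assms(5)] by blast
      have "\<rho>' g ?i0 = ?i0" if r': "goodrho Gm \<rho>'" "\<forall>s\<in>S. \<rho>' s = ?\<sigma> s" for \<rho>'
      proof -
        have "\<forall>s\<in>S. \<rho>' s = \<rho> s" using r'(2) by simp
        moreover have "g \<in> generate Gm S" using gc assms(4) by simp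
        ultimately have "\<rho>' g = \<rho> g" using goodrho_agree[OF assms(1,3) r'(1) good] by blast
        moreover have "\<rho> g ?i0 = e (U #>\<^bsub>Gm\<^esub> g)" using eR[OF UR] e'2[OF UR] unfolding \<rho>_def by simp
        moreover have "U #>\<^bsub>Gm\<^esub> g = U" by (rule Gm.coset_join2[OF gc assms(5) gU])
        ultimately show ?thesis by simp
      qed
      then show "g \<in> Phi Gm S (?\<sigma>, ?i0)" unfolding Phi_def using gc by auto
    qed
  qed
  then show ?thesis using mem by (metis image_eqI)
qed

lemma fg_finite_subgroups:
  assumes "group Gm" "finitely_generated_group Gm"
  shows "finite {U. subgroup U Gm \<and> finite (rcosets\<^bsub>Gm\<^esub> U) \<and> card (rcosets\<^bsub>Gm\<^esub> U) \<le> m}"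
proof -
  obtain S where S: "finite S" "S \<subseteq> carrier Gm" "generate Gm S = carrier Gm"
    using assms(2) unfolding finitely_generated_group_def by blast
  have "{U. subgroup U Gm \<and> finite (rcosets\<^bsub>Gm\<^esub> U) \<and> card (rcosets\<^bsub>Gm\<^esub> U) \<le> m}
        \<subseteq> Phi Gm S ` ((\<Pi>\<^sub>E s\<in>S. FF m) \<times> {..<m})"
    using subgroup_code[OF assms(1) S] by blast
  moreover have "finite ((\<Pi>\<^sub>E s\<in>S. FF m) \<times> {..<m})"
    using finite_PiE[OF S(1), of "\<lambda>_. FF m"] FF_finite by simp
  ultimately show ?thesis using finite_subset by blast
qed


lemma surj_group:
  assumes "group Gm" "\<psi> ` carrier Gm = carrier H"
    "\<And>g h. g \<in> carrier Gm \<Longrightarrow> h \<in> carrier Gm \<Longrightarrow> \<psi> (g \<otimes>\<^bsub>Gm\<^esub> h) = \<psi> g \<otimes>\<^bsub>H\<^esub> \<psi> h"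
    "\<psi> \<one>\<^bsub>Gm\<^esub> = \<one>\<^bsub>H\<^esub>"
  shows "group H"
proof -
  interpret Gm: group Gm by fact
  have pre: "\<exists>g\<in>carrier Gm. x = \<psi> g" if "x \<in> carrier H" for x using assms(2) that by blast
  show ?thesis
  proof (rule groupI)
    fix x y assume x: "x \<in> carrier H" and y: "y \<in> carrier H"
    obtain g h where "g \<in> carrier Gm" "x = \<psi> g" "h \<in> carrier Gm" "y = \<psi> h" using pre x y by blast
    then have "x \<otimes>\<^bsub>H\<^esub> y = \<psi> (g \<otimes>\<^bsub>Gm\<^esub> h)" "g \<otimes>\<^bsub>Gm\<^esub> h \<in> carrier Gm" using assms(3) by auto
    then show "x \<otimes>\<^bsub>H\<^esub> y \<in> carrier H" using assms(2) by blast
  next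
    have "\<psi> \<one>\<^bsub>Gm\<^esub> \<in> carrier H" using assms(2) Gm.one_closed by blast
    then show "\<one>\<^bsub>H\<^esub> \<in> carrier H" using assms(4) by simp
  next
    fix x y z assume x: "x \<in> carrier H" and y: "y \<in> carrier H" and z: "z \<in> carrier H"
    obtain g where g: "g \<in> carrier Gm" "x = \<psi> g" using pre[OF x] by blast
    obtain h where h: "h \<in> carrier Gm" "y = \<psi> h" using pre[OF y] by blast
    obtain k where k: "k \<in> carrier Gm" "z = \<psi> k" using pre[OF z] by blast
    note ghk = g(1) g(2) h(1) h(2) k(1) k(2)
    have e1: "\<psi> (g \<otimes>\<^bsub>Gm\<^esub> h) = \<psi> g \<otimes>\<^bsub>H\<^esub> \<psi> h" by (rule assms(3)[OF ghk(1,3)])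
    have e2: "\<psi> (g \<otimes>\<^bsub>Gm\<^esub> h \<otimes>\<^bsub>Gm\<^esub> k) = \<psi> (g \<otimes>\<^bsub>Gm\<^esub> h) \<otimes>\<^bsub>H\<^esub> \<psi> k"
      by (rule assms(3)[OF Gm.m_closed[OF ghk(1,3)] ghk(5)])
    have e3: "\<psi> (h \<otimes>\<^bsub>Gm\<^esub> k) = \<psi> h \<otimes>\<^bsub>H\<^esub> \<psi> k" by (rule assms(3)[OF ghk(3,5)])
    have e4: "\<psi> (g \<otimes>\<^bsub>Gm\<^esub> (h \<otimes>\<^bsub>Gm\<^esub> k)) = \<psi> g \<otimes>\<^bsub>H\<^esub> \<psi> (h \<otimes>\<^bsub>Gm\<^esub> k)"
      by (rule assms(3)[OF ghk(1) Gm.m_closed[OF ghk(3,5)]])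
    have e5: "g \<otimes>\<^bsub>Gm\<^esub> h \<otimes>\<^bsub>Gm\<^esub> k = g \<otimes>\<^bsub>Gm\<^esub> (h \<otimes>\<^bsub>Gm\<^esub> k)" by (rule Gm.m_assoc[OF ghk(1,3,5)])
    have "x \<otimes>\<^bsub>H\<^esub> y \<otimes>\<^bsub>H\<^esub> z = \<psi> g \<otimes>\<^bsub>H\<^esub> \<psi> h \<otimes>\<^bsub>H\<^esub> \<psi> k" by (simp only: ghk(2,4,6))
    also have "\<dots> = \<psi> (g \<otimes>\<^bsub>Gm\<^esub> h \<otimes>\<^bsub>Gm\<^esub> k)" by (simp only: e1 e2)
    also have "\<dots> = \<psi> (g \<otimes>\<^bsub>Gm\<^esub> (h \<otimes>\<^bsub>Gm\<^esub> k))" by (simp only: e5)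
    also have "\<dots> = \<psi> g \<otimes>\<^bsub>H\<^esub> (\<psi> h \<otimes>\<^bsub>H\<^esub> \<psi> k)" by (simp only: e3 e4)
    also have "\<dots> = x \<otimes>\<^bsub>H\<^esub> (y \<otimes>\<^bsub>H\<^esub> z)" by (simp only: ghk(2,4,6))
    finally show "x \<otimes>\<^bsub>H\<^esub> y \<otimes>\<^bsub>H\<^esub> z = x \<otimes>\<^bsub>H\<^esub> (y \<otimes>\<^bsub>H\<^esub> z)" .
  next
    fix x assume x: "x \<in> carrier H"
    obtain g where g: "g \<in> carrier Gm" "x = \<psi> g" using pre[OF x] by blast
    have "\<psi> (\<one>\<^bsub>Gm\<^esub> \<otimes>\<^bsub>Gm\<^esub> g) = \<psi> \<one>\<^bsub>Gm\<^esub> \<otimes>\<^bsub>H\<^esub> \<psi> g" by (rule assms(3)[OF Gm.one_closed g(1)])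
    then show "\<one>\<^bsub>H\<^esub> \<otimes>\<^bsub>H\<^esub> x = x" using g assms(4) by simp
    have "\<psi> (inv\<^bsub>Gm\<^esub> g \<otimes>\<^bsub>Gm\<^esub> g) = \<psi> (inv\<^bsub>Gm\<^esub> g) \<otimes>\<^bsub>H\<^esub> \<psi> g" by (rule assms(3)[OF Gm.inv_closed[OF g(1)] g(1)])
    then have "\<psi> (inv\<^bsub>Gm\<^esub> g) \<otimes>\<^bsub>H\<^esub> x = \<one>\<^bsub>H\<^esub>" using g assms(4) by simp
    moreover have "\<psi> (inv\<^bsub>Gm\<^esub> g) \<in> carrier H" using assms(2) g(1) by blast
    ultimately show "\<exists>y\<in>carrier H. y \<otimes>\<^bsub>H\<^esub> x = \<one>\<^bsub>H\<^esub>" by blast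
  qed
qed

locale mainctx =
  fixes Gam :: "('a,'c) monoid_scheme" and G :: "('b,'d) monoid_scheme" and \<phi> :: "'a \<Rightarrow> 'b"
  assumes GG: "group Gam" and FG: "finitely_generated_group Gam" and GH: "group G"
    and finG: "finite (carrier G)" and hom\<phi>: "\<phi> \<in> hom Gam G" and surj\<phi>: "\<phi> ` carrier Gam = carrier G"
begin

abbreviation Pre :: "'b set \<Rightarrow> 'a set" where "Pre S \<equiv> {x \<in> carrier Gam. \<phi> x \<in> S}"
abbreviation Kg :: "'b set \<Rightarrow> ('a,'c) monoid_scheme" where "Kg S \<equiv> Gam\<lparr>carrier := Pre S\<rparr>"

lemma sPre: "subgroup S G \<Longrightarrow> subgroup (Pre S) Gam"
  by (rule preimage_subgroup[OF GG GH hom\<phi>])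

lemma fPre: "subgroup S G \<Longrightarrow> finite (rcosets\<^bsub>Gam\<^esub> (Pre S))"
  by (rule preimage_fin_index[OF GG GH hom\<phi> _]) (use surj\<phi> finG in simp_all)

lemma grpK: "subgroup S G \<Longrightarrow> group (Kg S)"
  by (rule group.subgroup_imp_group[OF GG sPre])

lemma finK:
  assumes S: "subgroup S G"
  shows "finite {N \<in> fin_index_normals (Kg S). idx (Kg S) N \<le> n}"
proof -
  let ?d = "card (rcosets\<^bsub>Gam\<^esub> (Pre S))"
  have "{N \<in> fin_index_normals (Kg S). idx (Kg S) N \<le> n} \<subseteq>
        {U. subgroup U Gam \<and> finite (rcosets\<^bsub>Gam\<^esub> U) \<and> card (rcosets\<^bsub>Gam\<^esub> U) \<le> n * ?d}"
  proof
    fix N assume N: "N \<in> {N \<in> fin_index_normals (Kg S). idx (Kg S) N \<le> n}"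
    have nN: "N \<lhd> Kg S" and fN: "finite (rcosets\<^bsub>Kg S\<^esub> N)" and iN: "card (rcosets\<^bsub>Kg S\<^esub> N) \<le> n"
      using N by (auto simp: FN_iff idx_def)
    have sNK: "subgroup N (Kg S)" using nN normal_imp_subgroup by blast
    have sN: "subgroup N Gam" by (rule group.incl_subgroup[OF GG sPre[OF S] sNK])
    have NK: "N \<subseteq> Pre S" using subgroup.subset[OF sNK] by simp
    have t: "finite (rcosets\<^bsub>Gam\<^esub> N) \<and> card (rcosets\<^bsub>Gam\<^esub> N) \<le> card (rcosets\<^bsub>Kg S\<^esub> N) * ?d"
      by (rule tower[OF GG sPre[OF S] sN NK fN fPre[OF S]])
    moreover have "card (rcosets\<^bsub>Kg S\<^esub> N) * ?d \<le> n * ?d" using iN by simp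
    ultimately have "card (rcosets\<^bsub>Gam\<^esub> N) \<le> n * ?d" "finite (rcosets\<^bsub>Gam\<^esub> N)" by linarith+
    then show "N \<in> {U. subgroup U Gam \<and> finite (rcosets\<^bsub>Gam\<^esub> U) \<and> card (rcosets\<^bsub>Gam\<^esub> U) \<le> n * ?d}"
      using sN by auto
  qed
  then show ?thesis using fg_finite_subgroups[OF GG FG] finite_subset by blast
qed

lemma UU_FNK: "subgroup S G \<Longrightarrow> UU (Kg S) n \<in> fin_index_normals (Kg S)"
  by (rule UU_FN[OF grpK finK])

lemma UU_Gam:
  assumes S: "subgroup S G"
  shows "subgroup (UU (Kg S) n) Gam \<and> finite (rcosets\<^bsub>Gam\<^esub> (UU (Kg S) n))"
proof -
  have nU: "UU (Kg S) n \<lhd> Kg S" and fU: "finite (rcosets\<^bsub>Kg S\<^esub> (UU (Kg S) n))"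
    using UU_FNK[OF S] by (auto simp: FN_iff)
  have sUK: "subgroup (UU (Kg S) n) (Kg S)" using nU normal_imp_subgroup by blast
  have sU: "subgroup (UU (Kg S) n) Gam" by (rule group.incl_subgroup[OF GG sPre[OF S] sUK])
  have "UU (Kg S) n \<subseteq> Pre S" using subgroup.subset[OF sUK] by simp
  from tower[OF GG sPre[OF S] sU this fU fPre[OF S]] sU show ?thesis by blast
qed

end


context mainctx
begin

lemma build_H:
  assumes nC: "C \<lhd> Gam" and fC: "finite (rcosets\<^bsub>Gam\<^esub> C)" and Cker: "C \<subseteq> Pre {\<one>\<^bsub>G\<^esub>}"
  shows "\<exists>(H::nat monoid) \<psi> \<theta>. group H \<and> finite (carrier H) \<and> \<psi> \<in> hom Gam H \<and> \<theta> \<in> hom H G \<and>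
     (\<forall>x\<in>carrier Gam. \<phi> x = \<theta> (\<psi> x)) \<and> \<psi> ` carrier Gam = carrier H \<and>
     (\<forall>x\<in>carrier Gam. \<psi> x = \<one>\<^bsub>H\<^esub> \<longleftrightarrow> x \<in> C)"
proof -
  interpret Gam: group Gam by (rule GG)
  interpret C: normal C Gam by (rule nC)
  interpret ph: group_hom Gam G \<phi>
    by (rule group_hom.intro[OF GG GH group_hom_axioms.intro[OF hom\<phi>]])
  have sC: "subgroup C Gam" using nC normal_imp_subgroup by blast
  let ?R = "rcosets\<^bsub>Gam\<^esub> C"
  obtain e N0 where e: "e ` ?R = {i::nat. i < N0}" "inj_on e ?R" using finite_imp_inj_to_nat_seg[OF fC] by blast
  define e' where "e' = inv_into ?R e"
  have e'e: "e' (e D) = D" if "D \<in> ?R" for D unfolding e'_def by (rule inv_into_f_f[OF e(2) that])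
  have cosR: "C #>\<^bsub>Gam\<^esub> g \<in> ?R" if "g \<in> carrier Gam" for g
    by (rule Gam.rcosetsI[OF subgroup.subset[OF sC] that])
  have CC: "C #>\<^bsub>Gam\<^esub> \<one>\<^bsub>Gam\<^esub> = C" by (rule Gam.coset_mult_one[OF subgroup.subset[OF sC]])
  have CR: "C \<in> ?R" using cosR[OF Gam.one_closed] CC by simp
  define H :: "nat monoid" where "H = \<lparr>carrier = e ` ?R, mult = (\<lambda>x y. e (e' x <#>\<^bsub>Gam\<^esub> e' y)), one = e C\<rparr>"
  define \<psi> where "\<psi> = (\<lambda>g. e (C #>\<^bsub>Gam\<^esub> g))"
  have carH: "carrier H = e ` ?R" unfolding H_def by simp
  have psi_mult: "\<psi> (g \<otimes>\<^bsub>Gam\<^esub> h) = \<psi> g \<otimes>\<^bsub>H\<^esub> \<psi> h" if g: "g \<in> carrier Gam" and h: "h \<in> carrier Gam" for g h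
  proof -
    have "\<psi> g \<otimes>\<^bsub>H\<^esub> \<psi> h = e ((C #>\<^bsub>Gam\<^esub> g) <#>\<^bsub>Gam\<^esub> (C #>\<^bsub>Gam\<^esub> h))"
      unfolding H_def \<psi>_def using e'e[OF cosR[OF g]] e'e[OF cosR[OF h]] by simp
    also have "\<dots> = e (C #>\<^bsub>Gam\<^esub> (g \<otimes>\<^bsub>Gam\<^esub> h))" using C.rcos_sum[OF g h] by simp
    finally show ?thesis unfolding \<psi>_def by simp
  qed
  have psi_one: "\<psi> \<one>\<^bsub>Gam\<^esub> = \<one>\<^bsub>H\<^esub>" unfolding \<psi>_def H_def using CC by simp
  have psi_surj: "\<psi> ` carrier Gam = carrier H"
    unfolding carH \<psi>_def rcosets_img image_image by (rule refl)
  have grpH: "group H" by (rule surj_group[OF GG psi_surj psi_mult psi_one])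
  have psi_hom: "\<psi> \<in> hom Gam H"
    unfolding hom_def using psi_surj psi_mult by auto
  have ker: "\<psi> x = \<one>\<^bsub>H\<^esub> \<longleftrightarrow> x \<in> C" if x: "x \<in> carrier Gam" for x
  proof
    assume "\<psi> x = \<one>\<^bsub>H\<^esub>"
    then have "e (C #>\<^bsub>Gam\<^esub> x) = e C" unfolding \<psi>_def H_def by simp
    then have "C #>\<^bsub>Gam\<^esub> x = C" using e(2) cosR[OF x] CR by (meson inj_onD)
    then show "x \<in> C" by (rule Gam.coset_join1[OF _ x sC])
  next
    assume "x \<in> C"
    then have "C #>\<^bsub>Gam\<^esub> x = C" by (rule Gam.coset_join2[OF x sC])
    then show "\<psi> x = \<one>\<^bsub>H\<^esub>" unfolding \<psi>_def H_def by simp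
  qed
  define \<theta> where "\<theta> = (\<lambda>h. \<phi> (SOME g. g \<in> carrier Gam \<and> \<psi> g = h))"
  have thpsi: "\<theta> (\<psi> x) = \<phi> x" if x: "x \<in> carrier Gam" for x
  proof -
    let ?g = "SOME g. g \<in> carrier Gam \<and> \<psi> g = \<psi> x"
    have "\<exists>g. g \<in> carrier Gam \<and> \<psi> g = \<psi> x" using x by blast
    then have g: "?g \<in> carrier Gam \<and> \<psi> ?g = \<psi> x" by (rule someI_ex)
    have ix: "inv\<^bsub>Gam\<^esub> x \<in> carrier Gam" using x by simp
    have gi: "?g \<otimes>\<^bsub>Gam\<^esub> inv\<^bsub>Gam\<^esub> x \<in> carrier Gam" using g ix by simp
    have "\<psi> (?g \<otimes>\<^bsub>Gam\<^esub> inv\<^bsub>Gam\<^esub> x) = \<psi> ?g \<otimes>\<^bsub>H\<^esub> \<psi> (inv\<^bsub>Gam\<^esub> x)" using psi_mult g ix by blast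
    also have "\<dots> = \<psi> x \<otimes>\<^bsub>H\<^esub> \<psi> (inv\<^bsub>Gam\<^esub> x)" using g by simp
    also have "\<dots> = \<psi> (x \<otimes>\<^bsub>Gam\<^esub> inv\<^bsub>Gam\<^esub> x)" using psi_mult[OF x ix] by simp
    also have "\<dots> = \<one>\<^bsub>H\<^esub>" using psi_one x by simp
    finally have "?g \<otimes>\<^bsub>Gam\<^esub> inv\<^bsub>Gam\<^esub> x \<in> C" using ker[OF gi] by simp
    then have k: "\<phi> (?g \<otimes>\<^bsub>Gam\<^esub> inv\<^bsub>Gam\<^esub> x) = \<one>\<^bsub>G\<^esub>" using Cker by blast
    have "?g = ?g \<otimes>\<^bsub>Gam\<^esub> inv\<^bsub>Gam\<^esub> x \<otimes>\<^bsub>Gam\<^esub> x" using g x by (simp add: Gam.m_assoc)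
    then have "\<phi> ?g = \<phi> (?g \<otimes>\<^bsub>Gam\<^esub> inv\<^bsub>Gam\<^esub> x) \<otimes>\<^bsub>G\<^esub> \<phi> x" using gi x by (metis ph.hom_mult)
    also have "\<dots> = \<phi> x" using k x by simp
    finally show ?thesis unfolding \<theta>_def by simp
  qed
  have th_hom: "\<theta> \<in> hom H G"
    unfolding hom_def
  proof (intro CollectI conjI ballI)
    show "\<theta> \<in> carrier H \<rightarrow> carrier G"
    proof
      fix h assume "h \<in> carrier H"
      then obtain x where x: "x \<in> carrier Gam" "h = \<psi> x" using psi_surj by blast
      then show "\<theta> h \<in> carrier G" using thpsi[OF x(1)] by simp
    qed
    fix h k assume h: "h \<in> carrier H" and k: "k \<in> carrier H"
    obtain x where x: "x \<in> carrier Gam" "h = \<psi> x" using psi_surj h by blast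
    obtain y where y: "y \<in> carrier Gam" "k = \<psi> y" using psi_surj k by blast
    have "\<theta> (h \<otimes>\<^bsub>H\<^esub> k) = \<theta> (\<psi> (x \<otimes>\<^bsub>Gam\<^esub> y))" using psi_mult[OF x(1) y(1)] x y by simp
    also have "\<dots> = \<phi> (x \<otimes>\<^bsub>Gam\<^esub> y)" using thpsi x y by simp
    also have "\<dots> = \<phi> x \<otimes>\<^bsub>G\<^esub> \<phi> y" using x y by simp
    also have "\<dots> = \<theta> h \<otimes>\<^bsub>G\<^esub> \<theta> k" using thpsi x y by simp
    finally show "\<theta> (h \<otimes>\<^bsub>H\<^esub> k) = \<theta> h \<otimes>\<^bsub>G\<^esub> \<theta> k" .
  qed
  have finH: "finite (carrier H)" unfolding carH using fC by simp
  show ?thesis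
    using grpH finH psi_hom th_hom thpsi psi_surj ker by metis
qed

end


context mainctx
begin

lemma datum_from_iso:
  fixes H :: "('h,'e) monoid_scheme"
  assumes S1: "subgroup G1 G" and S2: "subgroup G2 G" and grpH: "group H"
    and psi_hom: "\<psi> \<in> hom Gam H" and psi_surj: "\<psi> ` carrier Gam = carrier H"
    and ker: "\<forall>x\<in>carrier Gam. \<psi> x = \<one>\<^bsub>H\<^esub> \<longleftrightarrow> x \<in> C"
    and th_hom: "\<theta> \<in> hom H G" and fac: "\<forall>x\<in>carrier Gam. \<phi> x = \<theta> (\<psi> x)"
    and Cker: "C \<subseteq> Pre {\<one>\<^bsub>G\<^esub>}"
    and f: "f \<in> iso (H\<lparr>carrier := {h \<in> carrier H. \<theta> h \<in> G1}\<rparr>) (H\<lparr>carrier := {h \<in> carrier H. \<theta> h \<in> G2}\<rparr>)"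
  shows "datum (Kg G1) (Kg G2) C C {(a,b). a \<in> Pre G1 \<and> b \<in> Pre G2 \<and> f (\<psi> a) = \<psi> b}"
proof -
  interpret Gam: group Gam by (rule GG)
  interpret H: group H by (rule grpH)
  interpret ps: group_hom Gam H \<psi>
    by (rule group_hom.intro[OF GG grpH group_hom_axioms.intro[OF psi_hom]])
  let ?T1 = "{h \<in> carrier H. \<theta> h \<in> G1}" and ?T2 = "{h \<in> carrier H. \<theta> h \<in> G2}"
  let ?R = "{(a,b). a \<in> Pre G1 \<and> b \<in> Pre G2 \<and> f (\<psi> a) = \<psi> b}"
  have sT1: "subgroup ?T1 H" by (rule preimage_subgroup[OF grpH GH th_hom S1])
  have sT2: "subgroup ?T2 H" by (rule preimage_subgroup[OF grpH GH th_hom S2])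
  interpret fh: group_hom "H\<lparr>carrier := ?T1\<rparr>" "H\<lparr>carrier := ?T2\<rparr>" f
    by (rule group_hom.intro[OF H.subgroup_imp_group[OF sT1] H.subgroup_imp_group[OF sT2]
          group_hom_axioms.intro]) (use f in \<open>simp add: iso_def\<close>)
  have bij: "bij_betw f ?T1 ?T2" using f by (simp add: iso_def)
  have f1: "f \<one>\<^bsub>H\<^esub> = \<one>\<^bsub>H\<^esub>" using fh.hom_one by simp
  have fmul: "f (x \<otimes>\<^bsub>H\<^esub> y) = f x \<otimes>\<^bsub>H\<^esub> f y" if "x \<in> ?T1" "y \<in> ?T1" for x y
    using fh.hom_mult[of x y] that by simp
  have fT: "f x \<in> ?T2" if "x \<in> ?T1" for x by (rule bij_betw_apply[OF bij that])
  have finv: "f (inv\<^bsub>H\<^esub> x) = inv\<^bsub>H\<^esub> (f x)" if x: "x \<in> ?T1" for x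
  proof -
    have "f (inv\<^bsub>H\<lparr>carrier := ?T1\<rparr>\<^esub> x) = inv\<^bsub>H\<lparr>carrier := ?T2\<rparr>\<^esub> (f x)" using fh.hom_inv x by simp
    then show ?thesis using H.m_inv_consistent[OF sT1 x] H.m_inv_consistent[OF sT2 fT[OF x]] by simp
  qed
  have psiT: "\<psi> a \<in> {h \<in> carrier H. \<theta> h \<in> S}" if "a \<in> Pre S" for a S
    using that fac by auto
  have preT: "\<exists>a\<in>Pre S. \<psi> a = h" if hT: "h \<in> {h \<in> carrier H. \<theta> h \<in> S}" for h S
  proof -
    have "h \<in> \<psi> ` carrier Gam" using hT psi_surj by simp
    then obtain a where a: "a \<in> carrier Gam" "h = \<psi> a" by blast
    have "\<phi> a = \<theta> h" using fac a by simp
    then have "a \<in> Pre S" using a(1) hT by simp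
    then show ?thesis using a(2) by blast
  qed
  have sP1: "subgroup (Pre G1) Gam" by (rule sPre[OF S1])
  have sP2: "subgroup (Pre G2) Gam" by (rule sPre[OF S2])
  have c1: "?R \<subseteq> carrier (Kg G1) \<times> carrier (Kg G2)" by auto
  have c2: "\<forall>a b a' b'. (a,b) \<in> ?R \<longrightarrow> (a',b') \<in> ?R \<longrightarrow> (a \<otimes>\<^bsub>Kg G1\<^esub> a', b \<otimes>\<^bsub>Kg G2\<^esub> b') \<in> ?R"
  proof (intro allI impI)
    fix a b a' b' assume ab: "(a,b) \<in> ?R" and ab': "(a',b') \<in> ?R"
    have m1: "a \<otimes>\<^bsub>Gam\<^esub> a' \<in> Pre G1" using subgroup.m_closed[OF sP1] ab ab' by auto
    have m2: "b \<otimes>\<^bsub>Gam\<^esub> b' \<in> Pre G2" using subgroup.m_closed[OF sP2] ab ab' by auto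
    have "f (\<psi> (a \<otimes>\<^bsub>Gam\<^esub> a')) = f (\<psi> a \<otimes>\<^bsub>H\<^esub> \<psi> a')" using ab ab' by simp
    also have "\<dots> = f (\<psi> a) \<otimes>\<^bsub>H\<^esub> f (\<psi> a')" using fmul psiT ab ab' by blast
    also have "\<dots> = \<psi> b \<otimes>\<^bsub>H\<^esub> \<psi> b'" using ab ab' by simp
    also have "\<dots> = \<psi> (b \<otimes>\<^bsub>Gam\<^esub> b')" using ab ab' by simp
    finally show "(a \<otimes>\<^bsub>Kg G1\<^esub> a', b \<otimes>\<^bsub>Kg G2\<^esub> b') \<in> ?R" using m1 m2 by simp
  qed
  have c3: "\<forall>a b. (a,b) \<in> ?R \<longrightarrow> (inv\<^bsub>Kg G1\<^esub> a, inv\<^bsub>Kg G2\<^esub> b) \<in> ?R"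
  proof (intro allI impI)
    fix a b assume ab: "(a,b) \<in> ?R"
    have a: "a \<in> Pre G1" and b: "b \<in> Pre G2" using ab by auto
    have i1: "inv\<^bsub>Kg G1\<^esub> a = inv\<^bsub>Gam\<^esub> a" using Gam.m_inv_consistent[OF sP1 a] .
    have i2: "inv\<^bsub>Kg G2\<^esub> b = inv\<^bsub>Gam\<^esub> b" using Gam.m_inv_consistent[OF sP2 b] .
    have m1: "inv\<^bsub>Gam\<^esub> a \<in> Pre G1" using subgroup.m_inv_closed[OF sP1 a] .
    have m2: "inv\<^bsub>Gam\<^esub> b \<in> Pre G2" using subgroup.m_inv_closed[OF sP2 b] .
    have "f (\<psi> (inv\<^bsub>Gam\<^esub> a)) = f (inv\<^bsub>H\<^esub> (\<psi> a))" using a by simp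
    also have "\<dots> = inv\<^bsub>H\<^esub> (f (\<psi> a))" using finv psiT a by blast
    also have "\<dots> = \<psi> (inv\<^bsub>Gam\<^esub> b)" using ab by simp
    finally show "(inv\<^bsub>Kg G1\<^esub> a, inv\<^bsub>Kg G2\<^esub> b) \<in> ?R" using m1 m2 i1 i2 by simp
  qed
  have c4: "fst ` ?R = carrier (Kg G1)"
  proof
    show "fst ` ?R \<subseteq> carrier (Kg G1)" by auto
    show "carrier (Kg G1) \<subseteq> fst ` ?R"
    proof
      fix a assume "a \<in> carrier (Kg G1)"
      then have a: "a \<in> Pre G1" by simp
      have "f (\<psi> a) \<in> ?T2" using fT psiT a by blast
      then obtain b where b: "b \<in> Pre G2" "\<psi> b = f (\<psi> a)" using preT by blast
      then have "(a,b) \<in> ?R" using a by simp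
      then show "a \<in> fst ` ?R" by force
    qed
  qed
  have c5: "snd ` ?R = carrier (Kg G2)"
  proof
    show "snd ` ?R \<subseteq> carrier (Kg G2)" by auto
    show "carrier (Kg G2) \<subseteq> snd ` ?R"
    proof
      fix b assume "b \<in> carrier (Kg G2)"
      then have b: "b \<in> Pre G2" by simp
      have "\<psi> b \<in> ?T2" using psiT b by blast
      then have "\<psi> b \<in> f ` ?T1" using bij by (simp add: bij_betw_def)
      then obtain h where h: "h \<in> ?T1" "\<psi> b = f h" by blast
      then obtain a where a: "a \<in> Pre G1" "\<psi> a = h" using preT by blast
      then have "(a,b) \<in> ?R" using b h by simp
      then show "b \<in> snd ` ?R" by force
    qed
  qed
  have Cc: "a \<in> carrier Gam \<and> \<phi> a = \<one>\<^bsub>G\<^esub>" if "a \<in> C" for a using Cker that by blast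
  have g1: "\<one>\<^bsub>G\<^esub> \<in> G1" by (rule subgroup.one_closed[OF S1])
  have g2: "\<one>\<^bsub>G\<^esub> \<in> G2" by (rule subgroup.one_closed[OF S2])
  have c6: "C \<times> C \<subseteq> ?R"
  proof
    fix p assume "p \<in> C \<times> C"
    then obtain a b where ab: "p = (a,b)" "a \<in> C" "b \<in> C" by blast
    have "\<psi> a = \<one>\<^bsub>H\<^esub>" "\<psi> b = \<one>\<^bsub>H\<^esub>" using ker Cc ab by auto
    then show "p \<in> ?R" using ab Cc g1 g2 f1 by auto
  qed
  have one1: "\<one>\<^bsub>H\<^esub> \<in> ?T1" by (rule subgroup.one_closed[OF sT1])
  have inj: "inj_on f ?T1" using bij by (simp add: bij_betw_def)
  have c7: "\<forall>a b. (a,b) \<in> ?R \<longrightarrow> (a \<in> C \<longleftrightarrow> b \<in> C)"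
  proof (intro allI impI)
    fix a b assume ab: "(a,b) \<in> ?R"
    have a: "a \<in> Pre G1" and b: "b \<in> Pre G2" and e: "f (\<psi> a) = \<psi> b" using ab by auto
    have "a \<in> C \<longleftrightarrow> \<psi> a = \<one>\<^bsub>H\<^esub>" using ker a by auto
    also have "\<dots> \<longleftrightarrow> f (\<psi> a) = \<one>\<^bsub>H\<^esub>"
    proof
      assume "\<psi> a = \<one>\<^bsub>H\<^esub>" then show "f (\<psi> a) = \<one>\<^bsub>H\<^esub>" using f1 by simp
    next
      assume "f (\<psi> a) = \<one>\<^bsub>H\<^esub>"
      then have "f (\<psi> a) = f \<one>\<^bsub>H\<^esub>" using f1 by simp
      then show "\<psi> a = \<one>\<^bsub>H\<^esub>" using inj_onD[OF inj _ psiT[OF a] one1] by blast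
    qed
    also have "\<dots> \<longleftrightarrow> b \<in> C" using e ker b by auto
    finally show "a \<in> C \<longleftrightarrow> b \<in> C" .
  qed
  show ?thesis unfolding datum_def using c1 c2 c3 c4 c5 c6 c7 by blast
qed

end


context mainctx
begin

lemma level_nonempty:
  assumes S1: "subgroup G1 G" and S2: "subgroup G2 G"
    and hyp: "\<forall>(H :: nat monoid) \<psi> \<theta>. group H \<and> finite (carrier H) \<and>
           \<psi> \<in> hom Gam H \<and> \<theta> \<in> hom H G \<and> (\<forall>x \<in> carrier Gam. \<phi> x = \<theta> (\<psi> x)) \<longrightarrow>
           (H\<lparr>carrier := {h \<in> carrier H. \<theta> h \<in> G1}\<rparr> \<cong> H\<lparr>carrier := {h \<in> carrier H. \<theta> h \<in> G2}\<rparr>)"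
  shows "\<exists>R. datum (Kg G1) (Kg G2) (UU (Kg G1) n) (UU (Kg G2) n) R"
proof -
  interpret Gam: group Gam by (rule GG)
  let ?U1 = "UU (Kg G1) n" and ?U2 = "UU (Kg G2) n" and ?Ker = "Pre {\<one>\<^bsub>G\<^esub>}"
  have sT: "subgroup {\<one>\<^bsub>G\<^esub>} G" by (rule group.triv_subgroup[OF GH])
  let ?F = "{?Ker, ?U1, ?U2}"
  have F: "\<forall>N\<in>?F. subgroup N Gam \<and> finite (rcosets\<^bsub>Gam\<^esub> N)"
    using sPre[OF sT] fPre[OF sT] UU_Gam[OF S1] UU_Gam[OF S2] by auto
  have F': "\<forall>N\<in>?F. subgroup N Gam" using F by blast
  have sV: "subgroup (carrier Gam \<inter> \<Inter>?F) Gam" by (rule inter_subgroup[OF GG F'])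
  have fV: "finite (rcosets\<^bsub>Gam\<^esub> (carrier Gam \<inter> \<Inter>?F))" by (rule inter_fin_index[OF GG _ F]) simp
  obtain C where nC: "C \<lhd> Gam" and fC: "finite (rcosets\<^bsub>Gam\<^esub> C)" and CV: "C \<subseteq> carrier Gam \<inter> \<Inter>?F"
    using core_exists[OF GG sV fV] by blast
  have CK: "C \<subseteq> ?Ker" and CU1: "C \<subseteq> ?U1" and CU2: "C \<subseteq> ?U2" using CV by auto
  have sC: "subgroup C Gam" using nC normal_imp_subgroup by blast
  obtain H :: "nat monoid" and \<psi> \<theta> where H: "group H" "finite (carrier H)" "\<psi> \<in> hom Gam H" "\<theta> \<in> hom H G"
     "\<forall>x\<in>carrier Gam. \<phi> x = \<theta> (\<psi> x)" "\<psi> ` carrier Gam = carrier H"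
     "\<forall>x\<in>carrier Gam. \<psi> x = \<one>\<^bsub>H\<^esub> \<longleftrightarrow> x \<in> C"
    using build_H[OF nC fC CK] by blast
  have "H\<lparr>carrier := {h \<in> carrier H. \<theta> h \<in> G1}\<rparr> \<cong> H\<lparr>carrier := {h \<in> carrier H. \<theta> h \<in> G2}\<rparr>"
    using hyp H(1-5) by blast
  then obtain f where f: "f \<in> iso (H\<lparr>carrier := {h \<in> carrier H. \<theta> h \<in> G1}\<rparr>) (H\<lparr>carrier := {h \<in> carrier H. \<theta> h \<in> G2}\<rparr>)"
    unfolding is_iso_def by blast
  let ?R0 = "{(a,b). a \<in> Pre G1 \<and> b \<in> Pre G2 \<and> f (\<psi> a) = \<psi> b}"
  have d0: "datum (Kg G1) (Kg G2) C C ?R0"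
    by (rule datum_from_iso[OF S1 S2 H(1) H(3) H(6) H(7) H(4) H(5) CK f])
  have g1: "\<one>\<^bsub>G\<^esub> \<in> G1" by (rule subgroup.one_closed[OF S1])
  have g2: "\<one>\<^bsub>G\<^esub> \<in> G2" by (rule subgroup.one_closed[OF S2])
  have CP1: "C \<subseteq> Pre G1" using CK g1 by auto
  have CP2: "C \<subseteq> Pre G2" using CK g2 by auto
  have sC1: "subgroup C (Kg G1)" by (rule Gam.subgroup_incl[OF sC sPre[OF S1] CP1])
  have sC2: "subgroup C (Kg G2)" by (rule Gam.subgroup_incl[OF sC sPre[OF S2] CP2])
  have nU1: "?U1 \<lhd> Kg G1" using UU_FNK[OF S1] by (simp add: FN_iff)
  have nU2: "?U2 \<lhd> Kg G2" using UU_FNK[OF S2] by (simp add: FN_iff)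
  have iff: "\<forall>a b. (a,b) \<in> ?R0 \<longrightarrow> (a \<in> ?U1 \<longleftrightarrow> b \<in> ?U2)"
    using key[OF grpK[OF S1] grpK[OF S2] sC1 sC2 d0 finK[OF S1] finK[OF S2] CU1 CU2] by blast
  have "datum (Kg G1) (Kg G2) ?U1 ?U2 (restr (Kg G1) (Kg G2) ?U1 ?U2 ?R0)"
    by (rule restr_datum(1)[OF grpK[OF S1] grpK[OF S2] sC1 sC2 d0 nU1 nU2 CU1 CU2 iff])
  then show ?thesis by blast
qed

lemma main_result:
  assumes S1: "subgroup G1 G" and S2: "subgroup G2 G"
    and notiso: "\<not> profinite_completions_iso (Kg G1) (Kg G2)"
  shows "\<exists>(H :: nat monoid) \<psi> \<theta>. group H \<and> finite (carrier H) \<and>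
           \<psi> \<in> hom Gam H \<and> \<theta> \<in> hom H G \<and>
           (\<forall>x \<in> carrier Gam. \<phi> x = \<theta> (\<psi> x)) \<and>
           \<not> (H\<lparr>carrier := {h \<in> carrier H. \<theta> h \<in> G1}\<rparr>
                 \<cong> H\<lparr>carrier := {h \<in> carrier H. \<theta> h \<in> G2}\<rparr>)"
proof (rule ccontr)
  assume neg: "\<not> ?thesis"
  have hyp: "\<forall>(H :: nat monoid) \<psi> \<theta>. group H \<and> finite (carrier H) \<and>
           \<psi> \<in> hom Gam H \<and> \<theta> \<in> hom H G \<and> (\<forall>x \<in> carrier Gam. \<phi> x = \<theta> (\<psi> x)) \<longrightarrow>
           (H\<lparr>carrier := {h \<in> carrier H. \<theta> h \<in> G1}\<rparr> \<cong> H\<lparr>carrier := {h \<in> carrier H. \<theta> h \<in> G2}\<rparr>)"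
    using neg by blast
  let ?K1 = "Kg G1" and ?K2 = "Kg G2"
  define Lev where "Lev = (\<lambda>n. {R. datum ?K1 ?K2 (UU ?K1 n) (UU ?K2 n) R})"
  have gK1: "group ?K1" and gK2: "group ?K2" using grpK[OF S1] grpK[OF S2] by auto
  have US1: "subgroup (UU ?K1 n) ?K1" for n using UU_FNK[OF S1] by (simp add: FN_iff normal_imp_subgroup)
  have US2: "subgroup (UU ?K2 n) ?K2" for n using UU_FNK[OF S2] by (simp add: FN_iff normal_imp_subgroup)
  have UN1: "UU ?K1 n \<lhd> ?K1" for n using UU_FNK[OF S1] by (simp add: FN_iff)
  have UN2: "UU ?K2 n \<lhd> ?K2" for n using UU_FNK[OF S2] by (simp add: FN_iff)
  have UF1: "finite (rcosets\<^bsub>?K1\<^esub> (UU ?K1 n))" for n using UU_FNK[OF S1] by (simp add: FN_iff)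
  have UF2: "finite (rcosets\<^bsub>?K2\<^esub> (UU ?K2 n))" for n using UU_FNK[OF S2] by (simp add: FN_iff)
  have fin: "finite (Lev n)" for n unfolding Lev_def by (rule datum_finite[OF gK1 gK2 US1 US2 UF1 UF2])
  have ne: "Lev n \<noteq> {}" for n unfolding Lev_def using level_nonempty[OF S1 S2 hyp] by blast
  have H2: "\<exists>Q\<in>Lev n. P \<subseteq> Q" if nm: "n \<le> m" and P: "P \<in> Lev m" for n m P
  proof -
    have dP: "datum ?K1 ?K2 (UU ?K1 m) (UU ?K2 m) P" using P unfolding Lev_def by simp
    have iff: "\<forall>a b. (a,b) \<in> P \<longrightarrow> (a \<in> UU ?K1 n \<longleftrightarrow> b \<in> UU ?K2 n)"
      using key[OF gK1 gK2 US1 US2 dP finK[OF S1] finK[OF S2] UU_mono[OF nm] UU_mono[OF nm]] by blast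
    have "datum ?K1 ?K2 (UU ?K1 n) (UU ?K2 n) (restr ?K1 ?K2 (UU ?K1 n) (UU ?K2 n) P)"
         "P \<subseteq> restr ?K1 ?K2 (UU ?K1 n) (UU ?K2 n) P"
      using restr_datum[OF gK1 gK2 US1 US2 dP UN1 UN2 UU_mono[OF nm] UU_mono[OF nm] iff] by auto
    then show ?thesis unfolding Lev_def by blast
  qed
  have H3: "Q \<subseteq> R" if "n \<le> m" "m \<le> p" "P \<in> Lev p" "Q \<in> Lev m" "R \<in> Lev n" "P \<subseteq> Q" "P \<subseteq> R"
    for n m p P Q R
  proof -
    have dP: "datum ?K1 ?K2 (UU ?K1 p) (UU ?K2 p) P" and dQ: "datum ?K1 ?K2 (UU ?K1 m) (UU ?K2 m) Q"
      and dR: "datum ?K1 ?K2 (UU ?K1 n) (UU ?K2 n) R" using that unfolding Lev_def by auto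
    have fP: "fst ` P = carrier ?K1" using dP unfolding datum_def by blast
    show ?thesis by (rule datum_le[OF gK1 gK2 US1 dQ US1 dR UU_mono[OF that(1)] that(6) that(7) fP])
  qed
  have "\<exists>Rs. \<forall>n. Rs n \<in> Lev n \<and> Rs (Suc n) \<subseteq> Rs n"
  proof (rule koenig[of Lev])
    show "finite (Lev n)" for n by (rule fin)
    show "Lev n \<noteq> {}" for n by (rule ne)
    show "\<exists>Q\<in>Lev n. P \<subseteq> Q" if "n \<le> m" "P \<in> Lev m" for n m P by (rule H2[OF that])
    show "Q \<subseteq> R" if "n \<le> m" "m \<le> p" "P \<in> Lev p" "Q \<in> Lev m" "R \<in> Lev n" "P \<subseteq> Q" "P \<subseteq> R"
      for n m p P Q R by (rule H3[OF that])
  qed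
  then obtain Rs where Rs: "\<forall>n. Rs n \<in> Lev n \<and> Rs (Suc n) \<subseteq> Rs n" by blast
  have "setting ?K1 ?K2 Rs"
    unfolding setting_def using gK1 gK2 finK[OF S1] finK[OF S2] Rs unfolding Lev_def by auto
  then have "profinite_completions_iso ?K1 ?K2" by (rule completion_iso)
  then show False using notiso by simp
qed

end

theorem corollary1p6:
  fixes \<Gamma> :: "('a, 'c) monoid_scheme" and G :: "('b, 'd) monoid_scheme"
    and \<phi> :: "'a \<Rightarrow> 'b" and G1 G2 :: "'b set"
  assumes "group \<Gamma>" and "finitely_generated_group \<Gamma>"
    and "group G" and "finite (carrier G)"
    and "subgroup G1 G" and "subgroup G2 G"
    and "\<phi> \<in> hom \<Gamma> G" and "\<phi> ` carrier \<Gamma> = carrier G"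
    and "\<not> profinite_completions_iso
             (\<Gamma>\<lparr>carrier := {x \<in> carrier \<Gamma>. \<phi> x \<in> G1}\<rparr>)
             (\<Gamma>\<lparr>carrier := {x \<in> carrier \<Gamma>. \<phi> x \<in> G2}\<rparr>)"
  shows "\<exists>(H :: nat monoid) \<psi> \<theta>. group H \<and> finite (carrier H) \<and>
           \<psi> \<in> hom \<Gamma> H \<and> \<theta> \<in> hom H G \<and>
           (\<forall>x \<in> carrier \<Gamma>. \<phi> x = \<theta> (\<psi> x)) \<and>
           \<not> (H\<lparr>carrier := {h \<in> carrier H. \<theta> h \<in> G1}\<rparr>
                 \<cong> H\<lparr>carrier := {h \<in> carrier H. \<theta> h \<in> G2}\<rparr>)"
proof -
  interpret mainctx \<Gamma> G \<phi>
    by (rule mainctx.intro) (use assms in auto)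
  show ?thesis by (rule main_result[OF assms(5,6,9)])
qed


end
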